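(* Consider a fair execution of Algorithm DLE from a permitted initial configuration $C_0$, and let $l$ be the point occupied by the elected leader when the algorithm terminates. When Algorithm DLE terminates, for every $i\in\{0,\dots,\epsilon_G(l)\}$ there exists a contracted particle occupying a point at grid distance $i$ from $l$; moreover, no particle occupies a point at grid distance greater than $\epsilon_G(l)$ from $l$.
   Context: Geometry. The triangular grid $G$ has as vertices ("points") the points of the regular triangular lattice in the plane, adjacent iff at unit distance; each point has six incident edges, cyclically ordered clockwise. The grid distance $dist_G(u,v)$ is the shortest-path distance in $G$. A shape is a finite set of points (identified with its induced subgraph). For a connected shape $S$: the unbounded face is the outer face; a bounded face containing a grid point not in $S$ is a hole; the area of $S$ is $S$ with its hole points; the outer boundary is the set of points of $S$ on the boundary of the outer face; a boundary point is a point of $S$ adjacent to a point not in $S$. For a boundary point $v$, a local boundary $B$ of $v$ w.r.t. $S$ is a maximal clockwise cyclic interval of consecutive edges at $v$ leading to points not in $S$, with boundary count $c(v,B)=|B|-2$. $v$ is redundant if its neighbors in $S$ induce a connected subgraph; erodable if redundant and on the outer boundary (it then has a single local boundary $B$); SCE if erodable and $c(v,B)>0$. Model (amoebot, strong scheduler). Anonymous constant-memory particles each occupy one point (contracted) or two adjacent points (expanded; head and tail); no point is occupied twice. Ports $0,\dots,5$, common clockwise chirality, particles know neighbors' port numbers for common edges, read/write neighbors' memories. Moves: expansion into an adjacent empty point (new head), contraction, handover. Executions are sequences of atomic activations of single particles (read, compute, write, at most one move); fair if every particle is activated infinitely often. Permitted initial configuration $C_0$: all particles contracted, nonempty connected set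 $S_P(C_0)$ of occupied points; each particle knows for each port whether the adjacent point lies in the outer face of $S_P(C_0)$. The system's shape may become disconnected. Algorithm DLE. Maintains eligible set $S_e$, initially the area of $S_P(C_0)$; points are only removed. Particle $p$ has $status$ (initially $undecided$) and $eligible[0..5]$ (initially true iff the adjacent point is not in the outer face of $S_P(C_0)$). On activation: if expanded, contract into head; else if $p$ and all neighbors are decided, terminate; else if undecided and contracted at $v$: if no neighbor of $v$ is in $S_e$ (per $eligible$), become $leader$; else if $v$ is SCE w.r.t. $S_e$, remove $v$ from $S_e$ (neighbors whose head is adjacent to $v$ update their $eligible$ entry for $v$ to false), then if $v$ has an adjacent unoccupied point $u\in S_e$, set own $eligible$ entries to true except the one pointing from $u$ to $v$ (false) and expand into $u$, otherwise become $follower$. In any fair execution $S_e$ eventually equals a single point $l$, occupied by the unique leader. $\epsilon_G(l)=\max_{u\in S_P(C_0)} dist_G(l,u)$ is the eccentricity of $l$ w.r.t. $G$ in $C_0$. *)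

theory Defs
  imports Main
begin

text \<open>Points of the triangular lattice in axial coordinates: (x,y) is embedded at
  x*(1,0) + y*(1/2, sqrt 3/2).  The six unit directions, listed in clockwise order.\<close>

type_synonym point = "int \<times> int"

definition dirvec :: "nat \<Rightarrow> int \<times> int" where
  "dirvec i = [(1,0), (1,-1), (0,-1), (-1,0), (-1,1), (0,1)] ! (i mod 6)"

definition nb :: "point \<Rightarrow> nat \<Rightarrow> point" where
  "nb v i = (fst v + fst (dirvec i), snd v + snd (dirvec i))"

definition gadj :: "point \<Rightarrow> point \<Rightarrow> bool" where
  "gadj u v \<longleftrightarrow> (\<exists>i<6. v = nb u i)"

definition gedges :: "(point \<times> point) set" where
  "gedges = {(u, v). gadj u v}"

definition gdist :: "point \<Rightarrow> point \<Rightarrow> nat" where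
  "gdist u v = (LEAST n. (u, v) \<in> gedges ^^ n)"

definition connected_set :: "point set \<Rightarrow> bool" where
  "connected_set A \<longleftrightarrow> (\<forall>a\<in>A. \<forall>b\<in>A. (a, b) \<in> (Restr gedges A)\<^sup>*)"

definition connected_shape :: "point set \<Rightarrow> bool" where
  "connected_shape S \<longleftrightarrow> finite S \<and> S \<noteq> {} \<and> connected_set S"

definition in_outer_face :: "point set \<Rightarrow> point \<Rightarrow> bool" where
  "in_outer_face S u \<longleftrightarrow> u \<notin> S \<and> infinite {w. (u, w) \<in> (Restr gedges (- S))\<^sup>*}"

definition area :: "point set \<Rightarrow> point set" where
  "area S = S \<union> {u. u \<notin> S \<and> \<not> in_outer_face S u}"

definition on_outer_boundary :: "point set \<Rightarrow> point \<Rightarrow> bool" where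
  "on_outer_boundary S v \<longleftrightarrow> v \<in> S \<and> (\<exists>u. gadj v u \<and> in_outer_face S u)"

text \<open>Local boundary: maximal clockwise cyclic interval of consecutive directions at v
  whose edges lead to points not in S (given as a set of directions in {0..5}).\<close>
definition local_boundary :: "point set \<Rightarrow> point \<Rightarrow> nat set \<Rightarrow> bool" where
  "local_boundary S v B \<longleftrightarrow> v \<in> S \<and>
     (\<exists>s k. s < 6 \<and> 1 \<le> k \<and> k \<le> 6 \<and> B = {(s + j) mod 6 | j. j < k} \<and>
        (\<forall>j<k. nb v ((s + j) mod 6) \<notin> S) \<and>
        (k < 6 \<longrightarrow> nb v ((s + 5) mod 6) \<in> S \<and> nb v ((s + k) mod 6) \<in> S))"

definition boundary_count :: "nat set \<Rightarrow> int" where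
  "boundary_count B = int (card B) - 2"

definition redundant :: "point set \<Rightarrow> point \<Rightarrow> bool" where
  "redundant S v \<longleftrightarrow> v \<in> S \<and> connected_set {u. gadj v u \<and> u \<in> S}"

definition erodable :: "point set \<Rightarrow> point \<Rightarrow> bool" where
  "erodable S v \<longleftrightarrow> redundant S v \<and> on_outer_boundary S v"

definition SCE :: "point set \<Rightarrow> point \<Rightarrow> bool" where
  "SCE S v \<longleftrightarrow> erodable S v \<and> (\<exists>B. local_boundary S v B \<and> boundary_count B > 0)"

datatype loc = Contr point | Exp point point  \<comment> \<open>Exp head tail\<close>

datatype pstatus = Undecided | Leader | Follower

fun occ_pts :: "loc \<Rightarrow> point set" where
  "occ_pts (Contr v) = {v}"
| "occ_pts (Exp h t) = {h, t}"

record 'p conf =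
  pos :: "'p \<Rightarrow> loc"
  stat :: "'p \<Rightarrow> pstatus"
  terminated :: "'p \<Rightarrow> bool"
  elig :: "point set"

definition occupied :: "'p set \<Rightarrow> ('p, 'b) conf_scheme \<Rightarrow> point set" where
  "occupied P C = (\<Union>p\<in>P. occ_pts (pos C p))"

definition nbr_particles :: "'p set \<Rightarrow> ('p, 'b) conf_scheme \<Rightarrow> 'p \<Rightarrow> point \<Rightarrow> 'p set" where
  "nbr_particles P C p v = {q \<in> P. q \<noteq> p \<and> (\<exists>w \<in> occ_pts (pos C q). gadj v w)}"

inductive dle_step :: "'p set \<Rightarrow> 'p \<Rightarrow> 'p conf \<Rightarrow> 'p conf \<Rightarrow> bool" for P where
  idle_terminated:
    "terminated C p \<Longrightarrow> dle_step P p C C"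
| contract:
    "\<not> terminated C p \<Longrightarrow> pos C p = Exp h t \<Longrightarrow>
     dle_step P p C (C\<lparr>pos := (pos C)(p := Contr h)\<rparr>)"
| terminate:
    "\<not> terminated C p \<Longrightarrow> pos C p = Contr v \<Longrightarrow> stat C p \<noteq> Undecided \<Longrightarrow>
     (\<forall>q \<in> nbr_particles P C p v. stat C q \<noteq> Undecided) \<Longrightarrow>
     dle_step P p C (C\<lparr>terminated := (terminated C)(p := True)\<rparr>)"
| wait_decided:
    "\<not> terminated C p \<Longrightarrow> pos C p = Contr v \<Longrightarrow> stat C p \<noteq> Undecided \<Longrightarrow>
     (\<exists>q \<in> nbr_particles P C p v. stat C q = Undecided) \<Longrightarrow>
     dle_step P p C C"
| become_leader:
    "\<not> terminated C p \<Longrightarrow> pos C p = Contr v \<Longrightarrow> stat C p = Undecided \<Longrightarrow>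
     (\<forall>u. gadj v u \<longrightarrow> u \<notin> elig C) \<Longrightarrow>
     dle_step P p C (C\<lparr>stat := (stat C)(p := Leader)\<rparr>)"
| erode_expand:
    "\<not> terminated C p \<Longrightarrow> pos C p = Contr v \<Longrightarrow> stat C p = Undecided \<Longrightarrow>
     (\<exists>u. gadj v u \<and> u \<in> elig C) \<Longrightarrow> SCE (elig C) v \<Longrightarrow>
     gadj v u \<Longrightarrow> u \<notin> occupied P C \<Longrightarrow> u \<in> elig C - {v} \<Longrightarrow>
     dle_step P p C (C\<lparr>pos := (pos C)(p := Exp u v), elig := elig C - {v}\<rparr>)"
| erode_follower:
    "\<not> terminated C p \<Longrightarrow> pos C p = Contr v \<Longrightarrow> stat C p = Undecided \<Longrightarrow>
     (\<exists>u. gadj v u \<and> u \<in> elig C) \<Longrightarrow> SCE (elig C) v \<Longrightarrow>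
     \<not> (\<exists>u. gadj v u \<and> u \<notin> occupied P C \<and> u \<in> elig C - {v}) \<Longrightarrow>
     dle_step P p C (C\<lparr>stat := (stat C)(p := Follower), elig := elig C - {v}\<rparr>)"
| wait_undecided:
    "\<not> terminated C p \<Longrightarrow> pos C p = Contr v \<Longrightarrow> stat C p = Undecided \<Longrightarrow>
     (\<exists>u. gadj v u \<and> u \<in> elig C) \<Longrightarrow> \<not> SCE (elig C) v \<Longrightarrow>
     dle_step P p C C"

definition permitted_init :: "'p set \<Rightarrow> 'p conf \<Rightarrow> bool" where
  "permitted_init P C0 \<longleftrightarrow>
     finite P \<and> P \<noteq> {} \<and>
     (\<forall>p\<in>P. \<exists>v. pos C0 p = Contr v) \<and>
     inj_on (pos C0) P \<and>
     connected_shape (occupied P C0) \<and>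
     (\<forall>p\<in>P. stat C0 p = Undecided \<and> \<not> terminated C0 p) \<and>
     elig C0 = area (occupied P C0)"

definition fair_execution :: "'p set \<Rightarrow> (nat \<Rightarrow> 'p conf) \<Rightarrow> (nat \<Rightarrow> 'p) \<Rightarrow> bool" where
  "fair_execution P C act \<longleftrightarrow>
     (\<forall>i. act i \<in> P \<and> dle_step P (act i) (C i) (C (Suc i))) \<and>
     (\<forall>p\<in>P. \<forall>i. \<exists>j\<ge>i. act j = p)"

definition eccentricity :: "point set \<Rightarrow> point \<Rightarrow> nat" where
  "eccentricity S0 l = Max ((\<lambda>u. gdist l u) ` S0)"

end

theory Submission
  imports Defs
begin


definition hexn :: "int \<Rightarrow> int \<Rightarrow> int" where
  "hexn a b = max \<bar>a\<bar> (max \<bar>b\<bar> \<bar>a + b\<bar>)"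

definition hexd :: "point \<Rightarrow> point \<Rightarrow> nat" where
  "hexd u v = nat (hexn (fst v - fst u) (snd v - snd u))"

lemma mod6_cases: "(k::nat) mod 6 = 0 \<or> k mod 6 = 1 \<or> k mod 6 = 2 \<or> k mod 6 = 3 \<or> k mod 6 = 4 \<or> k mod 6 = 5"
  by arith

lemma dirvec_mod: "dirvec (k mod 6) = dirvec k"
  by (simp add: dirvec_def)

lemma nb_mod: "nb v (k mod 6) = nb v k"
  by (simp add: nb_def dirvec_mod)

lemma dirvec_vals:
  "dirvec 0 = (1,0)" "dirvec 1 = (1,-1)" "dirvec 2 = (0,-1)"
  "dirvec 3 = (-1,0)" "dirvec 4 = (-1,1)" "dirvec 5 = (0,1)" "dirvec (Suc 0) = (1,-1)"
  by (simp_all add: dirvec_def)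

lemma dirvec_cases:
  "dirvec k = (1,0) \<and> k mod 6 = 0 \<or> dirvec k = (1,-1) \<and> k mod 6 = 1 \<or> dirvec k = (0,-1) \<and> k mod 6 = 2 \<or>
   dirvec k = (-1,0) \<and> k mod 6 = 3 \<or> dirvec k = (-1,1) \<and> k mod 6 = 4 \<or> dirvec k = (0,1) \<and> k mod 6 = 5"
proof -
  have "dirvec k = dirvec (k mod 6)" by (simp add: dirvec_mod)
  then show ?thesis using mod6_cases[of k] by (elim disjE) (simp_all add: dirvec_vals)
qed

lemma hexd_nb: "hexd z (nb v k) = nat (hexn (fst v - fst z + fst (dirvec k)) (snd v - snd z + snd (dirvec k)))"
  by (simp add: hexd_def nb_def algebra_simps)

definition D6 :: "(int \<times> int) set" where
  "D6 = {(1,0), (1,-1), (0,-1), (-1,0), (-1,1), (0,1)}"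

lemma dirvec_D6: "dirvec k \<in> D6"
  using dirvec_cases[of k] by (auto simp: D6_def)

lemma hexn_step: "(da,db) \<in> D6 \<Longrightarrow> hexn (x+da) (y+db) \<le> hexn x y + 1 \<and> hexn x y \<le> hexn (x+da) (y+db) + 1"
  unfolding D6_def hexn_def by auto

lemma hexn_nonneg: "hexn a b \<ge> 0" by (simp add: hexn_def)

lemma hexd_adj: "gadj u v \<Longrightarrow> hexd z v \<le> hexd z u + 1 \<and> hexd z u \<le> hexd z v + 1"
proof -
  assume "gadj u v"
  then obtain i where v: "v = nb u i" by (auto simp: gadj_def)
  obtain da db where d: "dirvec i = (da,db)" by fastforce
  have "(da,db) \<in> D6" using dirvec_D6[of i] d by simp
  note h = hexn_step[OF this, of "fst u - fst z" "snd u - snd z"]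
  have h1: "hexn (fst u - fst z) (snd u - snd z) \<ge> 0" by (rule hexn_nonneg)
  have h2: "hexn (fst u - fst z + da) (snd u - snd z + db) \<ge> 0" by (rule hexn_nonneg)
  show ?thesis using h h1 h2 unfolding v hexd_def nb_def d by (simp add: algebra_simps, arith)
qed


lemma dirvec_shift: "k mod 6 = r \<Longrightarrow> dirvec (k + c) = dirvec ((r + c) mod 6)"
  unfolding dirvec_def by (metis mod_add_left_eq mod_mod_trivial)

lemma dirvec_k0: "k mod 6 = r \<Longrightarrow> dirvec k = dirvec r"
  by (simp add: dirvec_def)

lemma dirvec_addm: "dirvec (k + c) = dirvec (k mod 6 + c)"
  by (simp add: dirvec_def mod_add_left_eq)

lemma mod6_r: fixes k :: nat obtains "k mod 6 = 0" | "k mod 6 = 1" | "k mod 6 = 2" | "k mod 6 = 3" | "k mod 6 = 4" | "k mod 6 = 5"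
  using mod6_cases[of k] by (elim disjE) auto

lemma dirvec_opp: "dirvec (k + 3) = (- fst (dirvec k), - snd (dirvec k))"
  unfolding dirvec_addm[of k 3] dirvec_mod[of k, symmetric]
  by (cases k rule: mod6_r) (simp_all add: dirvec_def)

lemma dirvec_sum: "fst (dirvec k) + fst (dirvec (k+2)) = fst (dirvec (k+1)) \<and>
   snd (dirvec k) + snd (dirvec (k+2)) = snd (dirvec (k+1))"
  unfolding dirvec_addm[of k 2] dirvec_addm[of k 1] dirvec_mod[of k, symmetric]
  by (cases k rule: mod6_r) (simp_all add: dirvec_def)

lemma nb_nb_opp: "nb (nb u k) (k + 3) = u"
  by (simp add: nb_def dirvec_opp)

lemma gadj_nb: "k < 6 \<Longrightarrow> gadj u (nb u k)" by (auto simp: gadj_def)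

lemma gadj_nb': "gadj u (nb u k)"
  using gadj_nb[of "k mod 6" u] by (simp add: nb_mod)

lemma gadj_sym: "gadj u v \<Longrightarrow> gadj v u"
  by (auto simp: gadj_def intro: gadj_nb'[of v "_ + 3", unfolded gadj_def]
      simp del: nb_nb_opp) (metis gadj_nb' gadj_def nb_nb_opp)

lemma hexd_nb_int: "int (hexd z (nb v k)) = hexn (fst v - fst z + fst (dirvec k)) (snd v - snd z + snd (dirvec k))"
  by (simp add: hexd_def nb_def hexn_nonneg algebra_simps)

lemma hexd_int: "int (hexd u v) = hexn (fst v - fst u) (snd v - snd u)"
  by (simp add: hexd_def hexn_nonneg)

lemma dirvec_nz: "dirvec k \<noteq> (0,0)"
  using dirvec_cases[of k] by auto

lemma gadj_irrefl: "\<not> gadj u u"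
  using dirvec_nz by (auto simp: gadj_def nb_def prod_eq_iff)

lemma hexd_sym: "hexd u v = hexd v u"
  unfolding hexd_def hexn_def by (simp add: abs_minus_commute) (smt (verit))

lemma hexd_zero: "hexd u v = 0 \<longleftrightarrow> u = v"
  unfolding hexd_def hexn_def by (auto simp: prod_eq_iff)



lemma relpow_hexd: "(u,v) \<in> gedges ^^ n \<Longrightarrow> hexd u v \<le> n"
proof (induction n arbitrary: v)
  case 0 then show ?case by (simp add: hexd_zero)
next
  case (Suc n)
  then obtain w where "(u,w) \<in> gedges ^^ n" "(w,v) \<in> gedges" by auto
  then show ?case using Suc.IH[of w] hexd_adj[of w v u] by (auto simp: gedges_def)
qed

lemma step_toward_int: "hexn a b > 0 \<Longrightarrow>
  hexn (a - 1) b = hexn a b - 1 \<or> hexn (a - 1) (b + 1) = hexn a b - 1 \<or> hexn a (b + 1) = hexn a b - 1 \<or>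
  hexn (a + 1) b = hexn a b - 1 \<or> hexn (a + 1) (b - 1) = hexn a b - 1 \<or> hexn a (b - 1) = hexn a b - 1"
  unfolding hexn_def by smt

lemma step_toward: "hexd u v = Suc n \<Longrightarrow> \<exists>k<6. hexd (nb u k) v = n"
proof -
  assume h: "hexd u v = Suc n"
  define a where "a = fst v - fst u"
  define b where "b = snd v - snd u"
  have hi: "hexn a b = int n + 1" using h hexd_int[of u v] unfolding a_def b_def by simp
  have e: "int (hexd (nb u k) v) = hexn (a - fst (dirvec k)) (b - snd (dirvec k))" for k
    unfolding hexd_int a_def b_def by (simp add: nb_def algebra_simps)
  have "hexn a b > 0" using hi by simp
  from step_toward_int[OF this] hi
  have "\<exists>k<6. hexn (a - fst (dirvec k)) (b - snd (dirvec k)) = int n"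
    apply (elim disjE)
    subgoal by (rule exI[of _ 0]) (simp add: dirvec_vals)
    subgoal by (rule exI[of _ 1]) (simp add: dirvec_vals)
    subgoal by (rule exI[of _ 2]) (simp add: dirvec_vals)
    subgoal by (rule exI[of _ 3]) (simp add: dirvec_vals)
    subgoal by (rule exI[of _ 4]) (simp add: dirvec_vals)
    subgoal by (rule exI[of _ 5]) (simp add: dirvec_vals)
    done
  then show ?thesis using e by (metis of_nat_eq_iff)
qed

lemma path_hexd: "(u,v) \<in> gedges ^^ (hexd u v)"
proof (induction "hexd u v" arbitrary: u)
  case 0 then show ?case using hexd_zero[of u v] by simp
next
  case (Suc n)
  then obtain k where k: "k < 6" "hexd (nb u k) v = n" using step_toward[of u v n] by metis
  have "(nb u k, v) \<in> gedges ^^ n" using Suc.hyps(1)[of "nb u k"] k by simp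
  moreover have "(u, nb u k) \<in> gedges" using k by (auto simp: gedges_def gadj_def)
  ultimately have "(u,v) \<in> gedges ^^ Suc n" by (rule relpow_Suc_I2[rotated])
  then show ?case using Suc.hyps(2) by simp
qed

lemma gdist_eq: "gdist u v = hexd u v"
  unfolding gdist_def
  by (rule Least_equality) (auto simp: path_hexd relpow_hexd)



definition dtab :: "nat \<Rightarrow> int \<times> int" where
  "dtab r = [(1,0), (1,-1), (0,-1), (-1,0), (-1,1), (0,1)] ! r"
lemma dv_add: "dirvec (k + c) = dtab ((k mod 6 + c) mod 6)"
  unfolding dirvec_def dtab_def by (metis mod_add_left_eq)
lemma dv0: "dirvec k = dtab (k mod 6)"
  unfolding dirvec_def dtab_def by simp
lemma six_cases: "(r::nat) < 6 \<Longrightarrow> P 0 \<Longrightarrow> P 1 \<Longrightarrow> P 2 \<Longrightarrow> P 3 \<Longrightarrow> P 4 \<Longrightarrow> P 5 \<Longrightarrow> P r"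
proof -
  assume "r < 6" "P 0" "P 1" "P 2" "P 3" "P 4" "P 5"
  moreover have "r = 0 \<or> r = 1 \<or> r = 2 \<or> r = 3 \<or> r = 4 \<or> r = 5" using \<open>r < 6\<close> by arith
  ultimately show "P r" by (elim disjE) simp_all
qed
definition rp :: "point \<Rightarrow> nat \<Rightarrow> nat \<Rightarrow> point" where
  "rp z i n = (fst z + int i * fst (dirvec (n div i)) + int (n mod i) * fst (dirvec (n div i + 2)),
               snd z + int i * snd (dirvec (n div i)) + int (n mod i) * snd (dirvec (n div i + 2)))"

lemma dirvec_plus6: "dirvec (x + 6) = dirvec x"
  by (simp add: dirvec_def)

lemma rp_suc:
  assumes "i \<ge> 1"
  shows "rp z i (Suc n) = nb (rp z i n) (n div i + 2)"
proof (cases "Suc (n mod i) = i")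
  case True
  then have d: "Suc n div i = Suc (n div i)" "Suc n mod i = 0"
    using assms by (auto simp: div_Suc mod_Suc)
  have j: "int (n mod i) = int i - 1" using True by linarith
  have s1: "fst (dirvec (Suc (n div i))) = fst (dirvec (n div i)) + fst (dirvec (n div i + 2))"
    "snd (dirvec (Suc (n div i))) = snd (dirvec (n div i)) + snd (dirvec (n div i + 2))"
    using dirvec_sum[of "n div i"] by simp_all
  show ?thesis unfolding rp_def nb_def d j s1 by (simp add: algebra_simps)
next
  case False
  then have d: "Suc n div i = n div i" "Suc n mod i = Suc (n mod i)"
    using assms by (auto simp: div_Suc mod_Suc)
  show ?thesis unfolding rp_def nb_def d by (simp add: algebra_simps)
qed

lemma rp_period:
  assumes "i \<ge> 1"
  shows "rp z i (n + 6 * i) = rp z i n"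
proof -
  have "(n + 6 * i) div i = n div i + 6" "(n + 6 * i) mod i = n mod i" using assms by simp_all
  then show ?thesis unfolding rp_def
    using dirvec_plus6[of "n div i"] dirvec_plus6[of "n div i + 2"]
    by (simp add: add.commute add.left_commute)
qed

lemma rp_on:
  assumes "i \<ge> 1"
  shows "hexd z (rp z i n) = i"
proof -
  define s where "s = n div i"
  define j where "j = n mod i"
  have j: "j < i" using assms unfolding j_def by simp
  have "int (hexd z (rp z i n)) = hexn (int i * fst (dirvec s) + int j * fst (dirvec (s + 2)))
            (int i * snd (dirvec s) + int j * snd (dirvec (s + 2)))"
    unfolding hexd_int rp_def s_def j_def by simp
  also have "\<dots> = int i"
    unfolding dv_add[of s 2] dv0[of s]
    apply (rule six_cases[of "s mod 6"])
    apply simp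
    using j by (simp_all add: dtab_def hexn_def)
  finally show ?thesis by simp
qed

lemma side_cases:
  assumes "hexn a b = I" "I \<ge> 1"
  shows "(a = I \<and> -I < b \<and> b \<le> 0) \<or> (b = -I \<and> 0 < a \<and> a \<le> I) \<or> (a + b = -I \<and> -I < a \<and> a \<le> 0) \<or>
         (a = -I \<and> 0 \<le> b \<and> b < I) \<or> (b = I \<and> -I \<le> a \<and> a < 0) \<or> (a + b = I \<and> 0 \<le> a \<and> a < I)"
  using assms unfolding hexn_def by smt

lemma rp_at:
  assumes "j < i" "s < 6"
  shows "rp z i (s * i + j) = (fst z + int i * fst (dirvec s) + int j * fst (dirvec (s + 2)),
               snd z + int i * snd (dirvec s) + int j * snd (dirvec (s + 2)))"
proof -
  have "(s * i + j) div i = s" "(s * i + j) mod i = j" using assms by auto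
  then show ?thesis unfolding rp_def by simp
qed

lemma rp_surj:
  assumes "i \<ge> 1" "hexd z x = i"
  shows "\<exists>n < 6 * i. rp z i n = x"
proof -
  define a where "a = fst x - fst z"
  define b where "b = snd x - snd z"
  have h: "hexn a b = int i" using assms(2) hexd_int[of z x] unfolding a_def b_def by simp
  have xa: "x = (fst z + a, snd z + b)" unfolding a_def b_def by simp
  have I: "int i \<ge> 1" using assms by simp
  note sc = side_cases[OF h I]
  have ex: "\<exists>s j. s < 6 \<and> j < i \<and> int i * fst (dirvec s) + int j * fst (dirvec (s + 2)) = a \<and>
                   int i * snd (dirvec s) + int j * snd (dirvec (s + 2)) = b"
  proof -
    { assume c: "a = int i \<and> - int i < b \<and> b \<le> 0"
      have ?thesis by (rule exI[of _ 0], rule exI[of _ "nat (- b)"]) (use c in \<open>simp add: dirvec_def nat_less_iff\<close>) }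
    moreover
    { assume c: "b = - int i \<and> 0 < a \<and> a \<le> int i"
      have ?thesis by (rule exI[of _ 1], rule exI[of _ "nat (int i - a)"]) (use c in \<open>simp add: dirvec_def nat_less_iff\<close>) }
    moreover
    { assume c: "a + b = - int i \<and> - int i < a \<and> a \<le> 0"
      have ?thesis by (rule exI[of _ 2], rule exI[of _ "nat (- a)"]) (use c in \<open>simp add: dirvec_def nat_less_iff\<close>) }
    moreover
    { assume c: "a = - int i \<and> 0 \<le> b \<and> b < int i"
      have ?thesis by (rule exI[of _ 3], rule exI[of _ "nat b"]) (use c in \<open>simp add: dirvec_def nat_less_iff\<close>) }
    moreover
    { assume c: "b = int i \<and> - int i \<le> a \<and> a < 0"
      have ?thesis by (rule exI[of _ 4], rule exI[of _ "nat (a + int i)"]) (use c in \<open>simp add: dirvec_def nat_less_iff\<close>) }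
    moreover
    { assume c: "a + b = int i \<and> 0 \<le> a \<and> a < int i"
      have ?thesis by (rule exI[of _ 5], rule exI[of _ "nat a"]) (use c in \<open>simp add: dirvec_def nat_less_iff\<close>) }
    ultimately show ?thesis using sc by blast
  qed
  then obtain s j where sj: "s < 6" "j < i" "int i * fst (dirvec s) + int j * fst (dirvec (s + 2)) = a"
     "int i * snd (dirvec s) + int j * snd (dirvec (s + 2)) = b" by blast
  have "s * i + j < 6 * i"
  proof -
    have "s * i + j < s * i + i" using sj by simp
    also have "\<dots> = (s + 1) * i" by simp
    also have "\<dots> \<le> 6 * i" using sj(1) by (intro mult_right_mono) auto
    finally show ?thesis .
  qed
  moreover have "rp z i (s * i + j) = x" using rp_at[OF sj(2) sj(1), of z] sj(3,4) xa by simp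
  ultimately show ?thesis by blast
qed


lemma rp_inj_aux:
  assumes "A < 6" "B < 6" "ja < i" "jb < i"
    "int i * fst (dtab A) + int ja * fst (dtab ((A + 2) mod 6)) = int i * fst (dtab B) + int jb * fst (dtab ((B + 2) mod 6))"
    "int i * snd (dtab A) + int ja * snd (dtab ((A + 2) mod 6)) = int i * snd (dtab B) + int jb * snd (dtab ((B + 2) mod 6))"
  shows "A = B \<and> ja = jb"
proof -
  have hA: "A = 0 \<or> A = 1 \<or> A = 2 \<or> A = 3 \<or> A = 4 \<or> A = 5" using assms(1) by arith
  have hB: "B = 0 \<or> B = 1 \<or> B = 2 \<or> B = 3 \<or> B = 4 \<or> B = 5" using assms(2) by arith
  from hA hB assms(3-6) show ?thesis
    by (elim disjE; simp add: dtab_def; arith?)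
qed

lemma rp_inj:
  assumes "i \<ge> 1" "m < 6 * i" "n < 6 * i" "rp z i m = rp z i n"
  shows "m = n"
proof -
  have sm: "m div i < 6" "n div i < 6" using assms by (simp_all add: div_less_iff_less_mult)
  have jm: "m mod i < i" "n mod i < i" using assms by simp_all
  have e: "(m div i) mod 6 = m div i" "(n div i) mod 6 = n div i" using sm by simp_all
  from assms(4) have
    "int i * fst (dtab (m div i)) + int (m mod i) * fst (dtab ((m div i + 2) mod 6)) = int i * fst (dtab (n div i)) + int (n mod i) * fst (dtab ((n div i + 2) mod 6))"
    "int i * snd (dtab (m div i)) + int (m mod i) * snd (dtab ((m div i + 2) mod 6)) = int i * snd (dtab (n div i)) + int (n mod i) * snd (dtab ((n div i + 2) mod 6))"
    unfolding rp_def dv_add[of "m div i" 2] dv0[of "m div i"] dv_add[of "n div i" 2] dv0[of "n div i"] e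
    by simp_all
  from rp_inj_aux[OF sm jm this] have "m div i = n div i" "m mod i = n mod i" by auto
  then show ?thesis by (metis div_mult_mod_eq)
qed

lemma Restr_sym: "(a,b) \<in> (Restr gedges A)\<^sup>* \<Longrightarrow> (b,a) \<in> (Restr gedges A)\<^sup>*"
proof -
  have "sym (Restr gedges A)" unfolding sym_def gedges_def by (auto intro: gadj_sym)
  then have "sym ((Restr gedges A)\<^sup>*)" by (rule sym_rtrancl)
  then show "(a,b) \<in> (Restr gedges A)\<^sup>* \<Longrightarrow> (b,a) \<in> (Restr gedges A)\<^sup>*" by (rule symD)
qed

lemma ring_walk:
  assumes "i \<ge> 1" "\<forall>t\<le>k. rp z i (m + t) \<in> A"
  shows "(rp z i m, rp z i (m + k)) \<in> (Restr gedges A)\<^sup>*"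
  using assms(2)
proof (induction k)
  case 0 then show ?case by simp
next
  case (Suc k)
  have "(rp z i m, rp z i (m + k)) \<in> (Restr gedges A)\<^sup>*" using Suc by auto
  moreover have "(rp z i (m + k), rp z i (m + Suc k)) \<in> Restr gedges A"
  proof -
    have "rp z i (m + Suc k) = nb (rp z i (m + k)) ((m + k) div i + 2)"
      using rp_suc[OF assms(1), of z "m + k"] by simp
    moreover have "rp z i (m + k) \<in> A" "rp z i (m + Suc k) \<in> A" using Suc.prems by auto
    ultimately show ?thesis by (auto simp: gedges_def gadj_nb')
  qed
  ultimately show ?case by (rule rtrancl_into_rtrancl)
qed

lemma ring_conn_le:
  assumes i: "i \<ge> 1" and pq: "p \<le> q" "q < 6 * i" and nv: "nv < 6 * i" "nv \<noteq> p" "nv \<noteq> q"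
  shows "(rp z i p, rp z i q) \<in> (Restr gedges ({y. hexd z y = i} - {rp z i nv}))\<^sup>*"
proof (cases "p < nv \<and> nv < q")
  case False
  have "\<forall>t\<le>q - p. rp z i (p + t) \<in> {y. hexd z y = i} - {rp z i nv}"
  proof (intro allI impI)
    fix t assume t: "t \<le> q - p"
    have "p + t \<noteq> nv" using False t nv pq by auto
    moreover have "p + t < 6 * i" using t pq by simp
    ultimately have "rp z i (p + t) \<noteq> rp z i nv" using rp_inj[OF i, of "p + t" nv z] t pq nv by auto
    then show "rp z i (p + t) \<in> {y. hexd z y = i} - {rp z i nv}" using rp_on[OF i] by simp
  qed
  from ring_walk[OF i this] show ?thesis using pq by simp
next
  case True
  have "\<forall>t\<le>p + 6 * i - q. rp z i (q + t) \<in> {y. hexd z y = i} - {rp z i nv}"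
  proof (intro allI impI)
    fix t assume t: "t \<le> p + 6 * i - q"
    show "rp z i (q + t) \<in> {y. hexd z y = i} - {rp z i nv}"
    proof (cases "q + t < 6 * i")
      case True2: True
      have "q + t \<noteq> nv" using True by auto
      then have "rp z i (q + t) \<noteq> rp z i nv" using rp_inj[OF i, of "q + t" nv z] True2 nv by auto
      then show ?thesis using rp_on[OF i] by simp
    next
      case False2: False
      define r where "r = q + t - 6 * i"
      have r: "q + t = r + 6 * i" "r \<le> p" using False2 t True pq unfolding r_def by auto
      have "rp z i (q + t) = rp z i r" unfolding r(1) by (rule rp_period[OF i])
      moreover have "rp z i r \<noteq> rp z i nv" using rp_inj[OF i, of r nv z] r True nv pq by auto
      ultimately show ?thesis using rp_on[OF i] by simp
    qed
  qed
  from ring_walk[OF i this] have "(rp z i q, rp z i (p + 6 * i)) \<in> (Restr gedges ({y. hexd z y = i} - {rp z i nv}))\<^sup>*"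
    using True pq by simp
  then show ?thesis using rp_period[OF i, of z p] by (auto intro: Restr_sym)
qed

lemma ring_conn:
  assumes i: "i \<ge> 1" and h: "hexd z v = i" "hexd z x = i" "hexd z w = i" "x \<noteq> v" "w \<noteq> v"
  shows "(w, x) \<in> (Restr gedges ({y. hexd z y = i} - {v}))\<^sup>*"
proof -
  obtain nv where nv: "nv < 6 * i" "rp z i nv = v" using rp_surj[OF i h(1)] by blast
  obtain nx where nx: "nx < 6 * i" "rp z i nx = x" using rp_surj[OF i h(2)] by blast
  obtain nw where nw: "nw < 6 * i" "rp z i nw = w" using rp_surj[OF i h(3)] by blast
  have d: "nv \<noteq> nx" "nv \<noteq> nw" using nv nx nw h by auto
  show ?thesis
  proof (cases "nw \<le> nx")
    case True
    from ring_conn_le[where z=z, OF i True nx(1) nv(1) d(2) d(1)] show ?thesis using nv nx nw by simp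
  next
    case False
    then have "nx \<le> nw" by simp
    from ring_conn_le[where z=z, OF i this nw(1) nv(1) d(1) d(2)] show ?thesis using nv nx nw by (auto intro: Restr_sym)
  qed
qed


definition ndist :: "nat \<Rightarrow> nat \<Rightarrow> int" where
  "ndist j t = (if t = 0 \<or> t = 1 then 1 else if t = 2 then 0 else if t = 3 then -1
                else if t = 4 then (if j = 0 then 0 else -1) else (if j = 0 then 1 else 0))"

lemma nb_dist_aux:
  assumes "S < 6" "t < 6" "j < i"
  shows "hexn (int i * fst (dtab S) + int j * fst (dtab ((S + 2) mod 6)) + fst (dtab ((S + t) mod 6)))
              (int i * snd (dtab S) + int j * snd (dtab ((S + 2) mod 6)) + snd (dtab ((S + t) mod 6)))
         = int i + ndist j t"
proof -
  have hA: "S = 0 \<or> S = 1 \<or> S = 2 \<or> S = 3 \<or> S = 4 \<or> S = 5" using assms(1) by arith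
  have hB: "t = 0 \<or> t = 1 \<or> t = 2 \<or> t = 3 \<or> t = 4 \<or> t = 5" using assms(2) by arith
  from hA hB assms(3) show ?thesis
    by (elim disjE; simp add: dtab_def hexn_def ndist_def; arith?)
qed


lemma nb_offset_aux: "((s::nat) + ((k + 6 - s mod 6) mod 6)) mod 6 = k mod 6"
proof -
  have "(s + ((k + 6 - s mod 6) mod 6)) mod 6 = (s mod 6 + (k + 6 - s mod 6)) mod 6"
    by (metis mod_add_left_eq mod_add_right_eq)
  also have "s mod 6 + (k + 6 - s mod 6) = k + 6" by (simp add: less_imp_le_nat)
  finally show ?thesis by simp
qed
lemma nb_dist:
  assumes i: "i \<ge> 1" and t: "t < 6"
  shows "int (hexd z (nb (rp z i n) (n div i + t))) = int i + ndist (n mod i) t"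
proof -
  have S: "n div i mod 6 < 6" by simp
  have j: "n mod i < i" using i by simp
  show ?thesis
    unfolding hexd_nb_int rp_def dv_add[of "n div i" 2] dv0[of "n div i"] dv_add[of "n div i" t]
    using nb_dist_aux[OF S t j] by (simp add: algebra_simps)
qed

lemma nb_offset: "nb v k = nb v (s + ((k + 6 - s mod 6) mod 6))"
proof -
  have "(s + ((k + 6 - s mod 6) mod 6)) mod 6 = k mod 6" by (rule nb_offset_aux)
  then show ?thesis by (metis nb_mod)
qed

lemma nb_succ_adj: "gadj (nb v k) (nb v (Suc k))"
proof -
  have "nb v (Suc k) = nb (nb v k) (k + 2)"
    using dirvec_sum[of k] by (simp add: nb_def algebra_simps)
  then show ?thesis by (simp add: gadj_nb')
qed

lemma nb_eq_mod: "a mod 6 = b mod 6 \<Longrightarrow> nb v a = nb v b"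
  by (metis nb_mod)

lemma nb_inj: "nb v a = nb v b \<Longrightarrow> a mod 6 = b mod 6"
proof -
  assume "nb v a = nb v b"
  then have "dirvec a = dirvec b" by (simp add: nb_def prod_eq_iff)
  then have e: "dtab (a mod 6) = dtab (b mod 6)" by (simp add: dv0)
  have hA: "a mod 6 = 0 \<or> a mod 6 = 1 \<or> a mod 6 = 2 \<or> a mod 6 = 3 \<or> a mod 6 = 4 \<or> a mod 6 = 5" by arith
  have hB: "b mod 6 = 0 \<or> b mod 6 = 1 \<or> b mod 6 = 2 \<or> b mod 6 = 3 \<or> b mod 6 = 4 \<or> b mod 6 = 5" by arith
  from hA hB e show ?thesis by (elim disjE; simp add: dtab_def)
qed

lemma ring_index:
  assumes "i \<ge> 1" "hexd z v = i"
  obtains n where "rp z i n = v"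
  using rp_surj[OF assms] by blast

lemma inner_nb:
  assumes i: "i \<ge> 1" and hv: "hexd z v = i" and vu: "gadj v u" and hu: "hexd z u + 1 = i"
  shows "\<exists>w. gadj u w \<and> w \<noteq> v \<and> hexd z w = i"
proof -
  obtain n where n: "rp z i n = v" using ring_index[OF i hv] by blast
  define s where "s = n div i"
  define j where "j = n mod i"
  obtain k where k: "u = nb v k" using vu by (auto simp: gadj_def)
  define t where "t = (k + 6 - s mod 6) mod 6"
  have t6: "t < 6" unfolding t_def by simp
  have ut: "u = nb v (s + t)" unfolding k t_def by (rule nb_offset)
  have d: "\<And>t'. t' < 6 \<Longrightarrow> int (hexd z (nb v (s + t'))) = int i + ndist j t'"
    using nb_dist[OF i, of _ z n] n unfolding s_def j_def by simp
  from d[OF t6] ut hu have "ndist j t = -1" by simp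
  then have tc: "t = 3 \<or> (t = 4 \<and> j \<noteq> 0)" using t6 unfolding ndist_def by (auto split: if_splits)
  show ?thesis
  proof (cases "t = 3")
    case True
    define w where "w = nb v (s + 2)"
    have "gadj w u" unfolding w_def ut True using nb_succ_adj[of v "s + 2"] by (simp add: numeral_eq_Suc)
    moreover have "hexd z w = i" using d[of 2] unfolding w_def ndist_def by simp
    moreover have "w \<noteq> v" using gadj_nb'[of v "s + 2"] gadj_irrefl unfolding w_def by metis
    ultimately show ?thesis using gadj_sym by blast
  next
    case False
    with tc have t4: "t = 4" "j \<noteq> 0" by auto
    define w where "w = nb v (s + 5)"
    have "gadj u w" unfolding w_def ut t4 using nb_succ_adj[of v "s + 4"] by (simp add: numeral_eq_Suc)
    moreover have "hexd z w = i" using d[of 5] t4 unfolding w_def ndist_def by simp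
    moreover have "w \<noteq> v" using gadj_nb'[of v "s + 5"] gadj_irrefl unfolding w_def by metis
    ultimately show ?thesis by blast
  qed
qed


definition reach :: "point set \<Rightarrow> point \<Rightarrow> point set" where
  "reach A x = {y. (x, y) \<in> (Restr gedges A)\<^sup>*}"

lemma outer_reach: "in_outer_face S u \<longleftrightarrow> u \<notin> S \<and> infinite (reach (- S) u)"
  unfolding in_outer_face_def reach_def by simp

lemma reach_refl: "x \<in> reach A x" unfolding reach_def by simp

lemma Restr_mono_rtrancl: "A \<subseteq> B \<Longrightarrow> (a, b) \<in> (Restr r A)\<^sup>* \<Longrightarrow> (a, b) \<in> (Restr r B)\<^sup>*"
proof -
  assume "A \<subseteq> B" "(a, b) \<in> (Restr r A)\<^sup>*"
  moreover have "Restr r A \<subseteq> Restr r B" using \<open>A \<subseteq> B\<close> by auto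
  ultimately show ?thesis using rtrancl_mono by blast
qed

lemma reach_mono: "A \<subseteq> B \<Longrightarrow> reach A x \<subseteq> reach B x"
  unfolding reach_def using Restr_mono_rtrancl[of A B x] by auto

lemma reach_trans: "y \<in> reach A x \<Longrightarrow> reach A y \<subseteq> reach A x"
  unfolding reach_def by (auto intro: rtrancl_trans)

lemma reach_sym: "y \<in> reach A x \<Longrightarrow> x \<in> reach A y"
  unfolding reach_def by (auto intro: Restr_sym)

lemma reach_step: "y \<in> reach A x \<Longrightarrow> y \<in> A \<Longrightarrow> gadj y y' \<Longrightarrow> y' \<in> A \<Longrightarrow> y' \<in> reach A x"
  unfolding reach_def by (auto intro: rtrancl_into_rtrancl simp: gedges_def)

lemma reach_in: "y \<in> reach A x \<Longrightarrow> y \<noteq> x \<Longrightarrow> y \<in> A"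
  unfolding reach_def by (auto elim: rtranclE[of x y])

lemma reach_in': "y \<in> reach A x \<Longrightarrow> x \<in> A \<Longrightarrow> y \<in> A"
  using reach_in by blast

lemma window_core: "(a::nat) < 6 \<Longrightarrow> b < 6 \<Longrightarrow> t = 2 \<or> t = 3 \<or> t = 4 \<Longrightarrow> (a + 0) mod 6 \<noteq> (b + 1) mod 6 \<Longrightarrow> (a + 0) mod 6 \<noteq> (b + 5) mod 6
 \<Longrightarrow> (a + 0) mod 6 \<noteq> (b + t) mod 6 \<Longrightarrow> (a + 1) mod 6 \<noteq> (b + 1) mod 6 \<Longrightarrow> (a + 1) mod 6 \<noteq> (b + 5) mod 6
 \<Longrightarrow> (a + 1) mod 6 \<noteq> (b + t) mod 6 \<Longrightarrow> (a + 2) mod 6 \<noteq> (b + 1) mod 6 \<Longrightarrow> (a + 2) mod 6 \<noteq> (b + 5) mod 6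
 \<Longrightarrow> (a + 2) mod 6 \<noteq> (b + t) mod 6 \<Longrightarrow> False"
proof -
  assume h: "(a::nat) < 6" "b < 6"
  have "a = 0 \<or> a = 1 \<or> a = 2 \<or> a = 3 \<or> a = 4 \<or> a = 5" using h by arith
  moreover have "b = 0 \<or> b = 1 \<or> b = 2 \<or> b = 3 \<or> b = 4 \<or> b = 5" using h by arith
  ultimately show "t = 2 \<or> t = 3 \<or> t = 4 \<Longrightarrow> (a + 0) mod 6 \<noteq> (b + 1) mod 6 \<Longrightarrow> (a + 0) mod 6 \<noteq> (b + 5) mod 6
 \<Longrightarrow> (a + 0) mod 6 \<noteq> (b + t) mod 6 \<Longrightarrow> (a + 1) mod 6 \<noteq> (b + 1) mod 6 \<Longrightarrow> (a + 1) mod 6 \<noteq> (b + 5) mod 6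
 \<Longrightarrow> (a + 1) mod 6 \<noteq> (b + t) mod 6 \<Longrightarrow> (a + 2) mod 6 \<noteq> (b + 1) mod 6 \<Longrightarrow> (a + 2) mod 6 \<noteq> (b + 5) mod 6
 \<Longrightarrow> (a + 2) mod 6 \<noteq> (b + t) mod 6 \<Longrightarrow> False"
    by (elim disjE; simp)
qed

lemma window_contra:
  fixes s0 s tu :: nat
  assumes "tu = 2 \<or> tu = 3 \<or> tu = 4"
    and a: "s0 mod 6 \<noteq> (s + 1) mod 6" "s0 mod 6 \<noteq> (s + 5) mod 6" "s0 mod 6 \<noteq> (s + tu) mod 6"
    and b: "(s0 + 1) mod 6 \<noteq> (s + 1) mod 6" "(s0 + 1) mod 6 \<noteq> (s + 5) mod 6" "(s0 + 1) mod 6 \<noteq> (s + tu) mod 6"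
    and c: "(s0 + 2) mod 6 \<noteq> (s + 1) mod 6" "(s0 + 2) mod 6 \<noteq> (s + 5) mod 6" "(s0 + 2) mod 6 \<noteq> (s + tu) mod 6"
  shows False
proof -
  have e: "(s0 mod 6 + 1) mod 6 = (s0+1) mod 6" "(s0 mod 6 + 2) mod 6 = (s0+2) mod 6"
    "(s mod 6 + 1) mod 6 = (s+1) mod 6" "(s mod 6 + 5) mod 6 = (s+5) mod 6"
    "(s mod 6 + tu) mod 6 = (s+tu) mod 6" "(s0 mod 6 + 0) mod 6 = s0 mod 6"
    by (metis mod_add_left_eq mod_mod_trivial add_0_right)+
  have P: "s0 mod 6 < 6" "s mod 6 < 6" by simp_all
  note W = window_core[OF P assms(1), unfolded e]
  show False by (rule W) (fact a b c)+
qed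


lemma adjn: "b = a + 1 \<Longrightarrow> gadj (nb v (s + a)) (nb v (s + b))"
  using nb_succ_adj[of v "s + a"] by simp

lemma key:
  assumes i: "i \<ge> 1" and hv: "hexd z v = i" and vX: "v \<in> X" and XS: "X \<subseteq> S"
    and uniq: "\<forall>x\<in>X. hexd z x = i \<longrightarrow> x = v"
    and w: "hexd z w = i" "w \<noteq> v" "finite (reach (- X) w)"
    and y: "gadj v y" "in_outer_face S y"
    and win: "\<forall>j'<3. nb v (s0 + j') \<notin> S"
    and u: "gadj v u" "u \<in> S" "u \<notin> X"
  shows False
proof -
  define C where "C = reach (- X) w"
  have wX: "w \<notin> X" using uniq w by auto
  have ringC: "x \<in> C" if "hexd z x = i" "x \<noteq> v" for x
  proof -
    from ring_conn[OF i hv that(1) w(1) that(2) w(2)]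
    have a: "(w,x) \<in> (Restr gedges ({y. hexd z y = i} - {v}))\<^sup>*" .
    have b: "{y. hexd z y = i} - {v} \<subseteq> - X" using uniq by auto
    show "x \<in> C" unfolding C_def reach_def using Restr_mono_rtrancl[OF b a] by simp
  qed
  have stepC: "x' \<in> C" if "x \<in> C" "gadj x x'" "x' \<notin> X" for x x'
  proof -
    have xC: "x \<in> reach (- X) w" using that(1) unfolding C_def .
    have "x \<in> - X" using reach_in'[OF xC] wX by auto
    then show "x' \<in> C" unfolding C_def using reach_step[OF xC _ that(2)] that(3) by auto
  qed
  have yS: "y \<notin> S" using y(2) by (simp add: outer_reach)
  have yX: "y \<notin> X" using yS XS by auto
  have yC: "y \<notin> C"
  proof
    assume "y \<in> C"
    then have "reach (-X) y \<subseteq> C" unfolding C_def by (rule reach_trans)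
    moreover have "reach (-S) y \<subseteq> reach (-X) y" using XS by (intro reach_mono) auto
    ultimately have "finite (reach (-S) y)" using w(3) unfolding C_def by (meson finite_subset)
    then show False using y(2) by (simp add: outer_reach)
  qed
  obtain n where n: "rp z i n = v" using ring_index[OF i hv] by blast
  define s where "s = n div i"
  define j where "j = n mod i"
  have d: "int (hexd z (nb v (s + t))) = int i + ndist j t" if "t < 6" for t
    using nb_dist[OF i that, of z n] n unfolding s_def j_def by simp
  have ringnb: "nb v (s + t) \<in> C" if "t < 6" "ndist j t = 0" for t
  proof -
    have "hexd z (nb v (s + t)) = i" using d[OF that(1)] that(2) by simp
    moreover have "nb v (s + t) \<noteq> v" using gadj_nb'[of v "s + t"] gadj_irrefl by metis
    ultimately show ?thesis by (rule ringC)
  qed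
  obtain ky where ky: "y = nb v ky" using y(1) by (auto simp: gadj_def)
  define ty where "ty = (ky + 6 - s mod 6) mod 6"
  have yt: "y = nb v (s + ty)" unfolding ky ty_def by (rule nb_offset)
  have ty6: "ty < 6" unfolding ty_def by simp
  obtain ku where ku: "u = nb v ku" using u(1) by (auto simp: gadj_def)
  define tu where "tu = (ku + 6 - s mod 6) mod 6"
  have ut: "u = nb v (s + tu)" unfolding ku tu_def by (rule nb_offset)
  have tu6: "tu < 6" unfolding tu_def by simp
  have r2: "nb v (s + 2) \<in> C" using ringnb[of 2] by (simp add: ndist_def)
  have n6: "nb v (s + 6) = nb v (s + 0)" by (rule nb_eq_mod) simp
  have tyc: "ty = 0 \<or> ty = 1 \<or> ty = 2 \<or> ty = 3 \<or> ty = 4 \<or> ty = 5" using ty6 by arith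
  have notyC: "ty = 0 \<and> j = 0"
  proof (rule ccontr)
    assume nc: "\<not> (ty = 0 \<and> j = 0)"
    have "y \<in> C"
    proof -
      { assume "ty = 2" then have ?thesis using r2 yt by simp }
      moreover
      { assume "ty = 1" then have ?thesis using stepC[OF r2 gadj_sym[OF adjn[of 2 1 v s]] ] yt yX by simp }
      moreover
      { assume "ty = 3" then have ?thesis using stepC[OF r2 adjn[of 3 2 v s]] yt yX by simp }
      moreover
      { assume j0: "j \<noteq> 0"
        have r5: "nb v (s + 5) \<in> C" using ringnb[of 5] j0 by (simp add: ndist_def)
        { assume "ty = 5" then have ?thesis using r5 yt by simp }
        moreover
        { assume "ty = 4" then have ?thesis using stepC[OF r5 gadj_sym[OF adjn[of 5 4 v s]]] yt yX by simp }
        moreover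
        { assume "ty = 0" then have ?thesis using stepC[OF r5 adjn[of 6 5 v s]] n6 yt yX by simp }
        ultimately have "ty = 4 \<or> ty = 5 \<or> ty = 0 \<Longrightarrow> ?thesis" by blast }
      moreover
      { assume j0: "j = 0"
        have r4: "nb v (s + 4) \<in> C" using ringnb[of 4] j0 by (simp add: ndist_def)
        { assume "ty = 4" then have ?thesis using r4 yt by simp }
        moreover
        { assume "ty = 5" then have ?thesis using stepC[OF r4 adjn[of 5 4 v s]] yt yX by simp }
        ultimately have "ty = 4 \<or> ty = 5 \<Longrightarrow> ?thesis" by blast }
      ultimately show ?thesis using tyc nc by (cases "j = 0") auto
    qed
    then show False using yC by simp
  qed
  then have ty0: "ty = 0" and j0: "j = 0" by auto
  have ys: "y = nb v s" using yt ty0 by simp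
  have r4: "nb v (s + 4) \<in> C" using ringnb[of 4] j0 by (simp add: ndist_def)
  have o1X: "nb v (s + 1) \<in> X"
  proof (rule ccontr)
    assume "nb v (s + 1) \<notin> X"
    then have "nb v (s + 1) \<in> C" using stepC[OF r2 gadj_sym[OF adjn[of 2 1 v s]]] by simp
    then have "y \<in> C" using stepC[OF _ gadj_sym[OF adjn[of 1 0 v s]]] ys yX by simp
    then show False using yC by simp
  qed
  have o5X: "nb v (s + 5) \<in> X"
  proof (rule ccontr)
    assume "nb v (s + 5) \<notin> X"
    then have "nb v (s + 5) \<in> C" using stepC[OF r4 adjn[of 5 4 v s]] by simp
    then have "y \<in> C" using stepC[OF _ adjn[of 6 5 v s]] n6 ys yX by simp
    then show False using yC by simp
  qed
  have tuc: "tu = 2 \<or> tu = 3 \<or> tu = 4"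
  proof -
    have "tu \<noteq> 0" proof assume "tu = 0" then show False using ut ys u(2) yS by simp qed
    moreover have "tu \<noteq> 1" using ut o1X u(3) by auto
    moreover have "tu \<noteq> 5" using ut o5X u(3) by auto
    ultimately show ?thesis using tu6 by arith
  qed
  have o1S: "nb v (s + 1) \<in> S" and o5S: "nb v (s + 5) \<in> S" using o1X o5X XS by auto
  have uS': "nb v (s + tu) \<in> S" using ut u(2) by simp
  have neq: "(s0 + j') mod 6 \<noteq> (s + 1) mod 6 \<and> (s0 + j') mod 6 \<noteq> (s + 5) mod 6 \<and> (s0 + j') mod 6 \<noteq> (s + tu) mod 6"
    if "j' < 3" for j'
  proof -
    have ns: "nb v (s0 + j') \<notin> S" using win that by auto
    have "(s0 + j') mod 6 \<noteq> c mod 6" if "nb v c \<in> S" for c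
    proof
      assume "(s0 + j') mod 6 = c mod 6"
      then have "nb v (s0 + j') = nb v c" by (rule nb_eq_mod)
      then show False using ns that by simp
    qed
    then show ?thesis using o1S o5S uS' by blast
  qed
  show False
    using window_contra[of tu s0 s, OF tuc] neq[of 0] neq[of 1] neq[of 2] by simp
qed


lemma SCE_window:
  assumes "SCE S v"
  shows "\<exists>s0. \<forall>j'<3. nb v (s0 + j') \<notin> S"
proof -
  from assms obtain B where lb: "local_boundary S v B" and bc: "boundary_count B > 0"
    unfolding SCE_def by blast
  from lb obtain s k where k: "1 \<le> k" "k \<le> 6" "B = {(s + j) mod 6 | j. j < k}"
    and nS: "\<forall>j<k. nb v ((s + j) mod 6) \<notin> S"
    unfolding local_boundary_def by blast
  have "B = (\<lambda>j. (s + j) mod 6) ` {..<k}" using k(3) by auto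
  then have "card B \<le> k" using card_image_le[of "{..<k}" "\<lambda>j. (s + j) mod 6"] by simp
  moreover have "card B \<ge> 3" using bc unfolding boundary_count_def by simp
  ultimately have "k \<ge> 3" by simp
  then have "\<forall>j'<3. nb v (s + j') \<notin> S" using nS by (auto simp: nb_mod)
  then show ?thesis by blast
qed

lemma nb_adj_mod:
  assumes "gadj (nb v a) (nb v b)"
  shows "b mod 6 = (a + 1) mod 6 \<or> (b + 1) mod 6 = a mod 6"
proof -
  from assms obtain c where "c < 6" "nb v b = nb (nb v a) c" unfolding gadj_def by blast
  then have e: "dirvec b = (fst (dirvec a) + fst (dirvec c), snd (dirvec a) + snd (dirvec c))"
    by (simp add: nb_def prod_eq_iff algebra_simps)
  have D: "dirvec c \<in> D6" by (rule dirvec_D6)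
  have m: "\<And>x::nat. (x + 1) mod 6 = (x mod 6 + 1) mod 6" by (metis mod_add_left_eq)
  have hA: "a mod 6 = 0 \<or> a mod 6 = 1 \<or> a mod 6 = 2 \<or> a mod 6 = 3 \<or> a mod 6 = 4 \<or> a mod 6 = 5" by arith
  have hB: "b mod 6 = 0 \<or> b mod 6 = 1 \<or> b mod 6 = 2 \<or> b mod 6 = 3 \<or> b mod 6 = 4 \<or> b mod 6 = 5" by arith
  have e2: "(fst (dtab (b mod 6)) - fst (dtab (a mod 6)), snd (dtab (b mod 6)) - snd (dtab (a mod 6))) \<in> D6"
    using e D unfolding dv0 by (auto simp: prod_eq_iff)
  show ?thesis unfolding m[of a] m[of b]
    using hA hB e2 by (elim disjE; simp add: dtab_def D6_def)
qed

lemma nb_of_gadj: "gadj v x \<Longrightarrow> \<exists>m. x = nb v m"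
  unfolding gadj_def by blast

lemma mod6_cancel:
  assumes "((k::nat) + x) mod 6 = (k + y) mod 6"
  shows "x mod 6 = y mod 6"
proof -
  have "x mod 6 = (x + k * 6) mod 6" by simp
  also have "x + k * 6 = (k + x) + 5 * k" by simp
  also have "((k + x) + 5 * k) mod 6 = ((k + x) mod 6 + 5 * k) mod 6" by (rule mod_add_left_eq[symmetric])
  also have "\<dots> = ((k + y) mod 6 + 5 * k) mod 6" using assms by simp
  also have "\<dots> = ((k + y) + 5 * k) mod 6" by (rule mod_add_left_eq)
  also have "(k + y) + 5 * k = y + k * 6" by simp
  also have "(y + k * 6) mod 6 = y mod 6" by simp
  finally show ?thesis .
qed

lemma mod6_pred: "((x::nat) + 1) mod 6 = (y + 1) mod 6 \<Longrightarrow> x mod 6 = y mod 6"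
  using mod6_cancel[of 1 x y] by (simp add: add.commute)

lemma mod6_gap:
  assumes "(q::nat) mod 6 = t mod 6" "q < t" "t < q + 6"
  shows False
proof -
  define d where "d = t - q"
  have t: "t = q + d" "0 < d" "d < 6" using assms unfolding d_def by auto
  have "(q + d) mod 6 = (q + 0) mod 6" using assms(1) t(1) by simp
  then have "d mod 6 = 0 mod 6" by (rule mod6_cancel)
  then show False using t by simp
qed

lemma no_sep:
  assumes red: "redundant S v"
    and ord: "p < r1" "r1 < q" "q < r2" "r2 < p + 6"
    and E: "nb v (k + p) \<in> S" "nb v (k + q) \<in> S"
    and nE: "nb v (k + r1) \<notin> S" "nb v (k + r2) \<notin> S"
  shows False
proof -
  define N where "N = {u. gadj v u \<and> u \<in> S}"
  have conn: "connected_set N" using red unfolding redundant_def N_def by simp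
  have pN: "nb v (k + p) \<in> N" "nb v (k + q) \<in> N" using E unfolding N_def by (auto simp: gadj_nb')
  then have path: "(nb v (k + p), nb v (k + q)) \<in> (Restr gedges N)\<^sup>*"
    using conn unfolding connected_set_def by blast
  define Side where "Side = {nb v (k + t) | t. r2 < t \<and> t < r1 + 6}"
  have start: "nb v (k + p) \<in> Side"
  proof -
    have "nb v (k + p) = nb v (k + (p + 6))" by (rule nb_eq_mod) (simp only: add.assoc[symmetric] mod_add_self2)
    then show ?thesis unfolding Side_def using ord by auto
  qed
  have closed: "y' \<in> Side" if "y \<in> Side" "(y, y') \<in> Restr gedges N" for y y'
  proof -
    from that(1) obtain t where t: "y = nb v (k + t)" "r2 < t" "t < r1 + 6" unfolding Side_def by blast
    from that(2) have y'N: "y' \<in> N" and ad: "gadj y y'" by (auto simp: gedges_def)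
    then obtain m where m: "y' = nb v m" using nb_of_gadj unfolding N_def by blast
    have y'S: "y' \<in> S" using y'N unfolding N_def by simp
    from nb_adj_mod[of v "k + t" m] ad t(1) m
    have "m mod 6 = (k + t + 1) mod 6 \<or> (m + 1) mod 6 = (k + t) mod 6" by simp
    then show "y' \<in> Side"
    proof
      assume h: "m mod 6 = (k + t + 1) mod 6"
      then have y'e: "y' = nb v (k + (t + 1))" unfolding m by (intro nb_eq_mod) simp
      show ?thesis
      proof (cases "t + 1 < r1 + 6")
        case True
        then have "y' = nb v (k + (t + 1)) \<and> r2 < t + 1 \<and> t + 1 < r1 + 6" using y'e t by simp
        then show ?thesis unfolding Side_def by blast
      next
        case False
        then have "t + 1 = r1 + 6" using t by simp
        then have "y' = nb v (k + r1)" using y'e by (metis nb_eq_mod mod_add_self2 add.assoc)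
        then show ?thesis using y'S nE by simp
      qed
    next
      assume h: "(m + 1) mod 6 = (k + t) mod 6"
      have tp: "t \<ge> 1" using t ord by simp
      have "m mod 6 = (k + (t - 1)) mod 6"
      proof -
        have "(m + 1) mod 6 = (k + (t - 1) + 1) mod 6" using h tp by simp
        then show ?thesis by (rule mod6_pred)
      qed
      then have y'e: "y' = nb v (k + (t - 1))" unfolding m by (rule nb_eq_mod)
      show ?thesis
      proof (cases "r2 < t - 1")
        case True
        then have "y' = nb v (k + (t - 1)) \<and> r2 < t - 1 \<and> t - 1 < r1 + 6" using y'e t by simp
        then show ?thesis unfolding Side_def by blast
      next
        case False
        then have "t - 1 = r2" using t by simp
        then show ?thesis using y'e y'S nE by simp
      qed
    qed
  qed
  have "y \<in> Side" if "(nb v (k + p), y) \<in> (Restr gedges N)\<^sup>*" for y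
    using that
  proof (induction rule: rtrancl_induct)
    case base then show ?case by (rule start)
  next
    case (step y z) then show ?case using closed by blast
  qed
  from this[OF path] obtain t where t: "nb v (k + q) = nb v (k + t)" "r2 < t" "t < r1 + 6"
    unfolding Side_def by blast
  have "(k + q) mod 6 = (k + t) mod 6" using nb_inj[OF t(1)] .
  then have "q mod 6 = t mod 6" by (rule mod6_cancel)
  then show False using t ord by (intro mod6_gap[of q t]) auto
qed


lemma arc_path:
  assumes "\<forall>t. t1 \<le> t \<and> t \<le> t2 \<longrightarrow> nb v (k + t) \<in> A" "t1 \<le> t2"
  shows "(nb v (k + t1), nb v (k + t2)) \<in> (Restr gedges A)\<^sup>*"
  using assms
proof (induction t2)
  case 0 then show ?case by simp
next
  case (Suc t2)
  show ?case
  proof (cases "t1 = Suc t2")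
    case True then show ?thesis by simp
  next
    case False
    then have "t1 \<le> t2" using Suc by simp
    then have "(nb v (k + t1), nb v (k + t2)) \<in> (Restr gedges A)\<^sup>*" using Suc by auto
    moreover have "(nb v (k + t2), nb v (k + Suc t2)) \<in> Restr gedges A"
    proof -
      have "nb v (k + t2) \<in> A" using Suc.prems(1) \<open>t1 \<le> t2\<close> by auto
      moreover have "nb v (k + Suc t2) \<in> A" using Suc.prems(1)[rule_format, of "Suc t2"] \<open>t1 \<le> t2\<close> by linarith
      ultimately show ?thesis using nb_succ_adj[of v "k + t2"] by (simp add: gedges_def)
    qed
    ultimately show ?thesis by (rule rtrancl_into_rtrancl)
  qed
qed

lemma window_offset:
  fixes s0 kb :: nat
  shows "((s0 + j) + 6 - kb mod 6) mod 6 = (((s0 + 6 - kb mod 6) mod 6) + j) mod 6"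
proof -
  have "kb mod 6 < 6" by simp
  then have "(s0 + j) + 6 - kb mod 6 = (s0 + 6 - kb mod 6) + j" by simp
  then show ?thesis by (simp add: mod_add_left_eq)
qed

lemma remove_redundant:
  assumes conn: "connected_set S" and red: "redundant S v"
  shows "connected_set (S - {v})"
  unfolding connected_set_def
proof (intro ballI)
  fix a b assume a: "a \<in> S - {v}" and b: "b \<in> S - {v}"
  define R' where "R' = Restr gedges (S - {v})"
  define N where "N = {u. gadj v u \<and> u \<in> S}"
  have connN: "connected_set N" using red unfolding redundant_def N_def by simp
  have NR: "(x, y) \<in> R'\<^sup>*" if "x \<in> N" "y \<in> N" for x y
  proof -
    have p: "(x, y) \<in> (Restr gedges N)\<^sup>*" using connN that unfolding connected_set_def by blast
    have sub: "N \<subseteq> S - {v}" unfolding N_def using gadj_irrefl by auto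
    show ?thesis unfolding R'_def using Restr_mono_rtrancl[OF sub p] .
  qed
  have ab: "(a, b) \<in> (Restr gedges S)\<^sup>*" using conn a b unfolding connected_set_def by auto
  have claim: "(y \<noteq> v \<longrightarrow> (a, y) \<in> R'\<^sup>*) \<and> (y = v \<longrightarrow> (\<exists>n\<in>N. (a, n) \<in> R'\<^sup>*))"
    if "(a, y) \<in> (Restr gedges S)\<^sup>*" for y
    using that
  proof (induction rule: rtrancl_induct)
    case base then show ?case using a by simp
  next
    case (step y z)
    then have yz: "gadj y z" "y \<in> S" "z \<in> S" by (auto simp: gedges_def)
    show ?case
    proof (cases "z = v")
      case True
      then have "y \<noteq> v" using yz gadj_irrefl by blast
      then have "(a, y) \<in> R'\<^sup>*" using step.IH by blast
      moreover have "y \<in> N" using yz True gadj_sym unfolding N_def by blast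
      ultimately show ?thesis using True by blast
    next
      case False
      show ?thesis
      proof (cases "y = v")
        case True
        then obtain n where n: "n \<in> N" "(a, n) \<in> R'\<^sup>*" using step.IH by blast
        have "z \<in> N" using yz True unfolding N_def by simp
        then have "(n, z) \<in> R'\<^sup>*" using NR n by blast
        then show ?thesis using n False by (meson rtrancl_trans)
      next
        case yv: False
        then have "(a, y) \<in> R'\<^sup>*" using step.IH by blast
        moreover have "(y, z) \<in> R'" using yz yv False unfolding R'_def gedges_def by simp
        ultimately show ?thesis using False by simp
      qed
    qed
  qed
  then show "(a, b) \<in> (Restr gedges (S - {v}))\<^sup>*"
    using claim[OF ab] b unfolding R'_def by blast
qed

lemma comb_arith:
  fixes w0 w1 w2 t1 ta t2 tu :: nat
  assumes "w0 < 6" "w1 = (w0 + 1) mod 6" "w2 = (w0 + 2) mod 6"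
    "0 < t1" "t1 < ta" "ta < t2" "t2 < 6" "tu < 6"
    "\<not> (t1 \<le> w0 \<and> w0 \<le> t2)" "\<not> (t1 \<le> w1 \<and> w1 \<le> t2)" "\<not> (t1 \<le> w2 \<and> w2 \<le> t2)"
    "w0 \<noteq> tu" "w1 \<noteq> tu" "w2 \<noteq> tu" "tu \<noteq> t1" "tu \<noteq> t2"
  shows "tu = ta"
proof -
  have "w0 = 0 \<or> w0 = 1 \<or> w0 = 2 \<or> w0 = 3 \<or> w0 = 4 \<or> w0 = 5" using assms(1) by arith
  then show ?thesis using assms(2-) by (elim disjE; simp; arith)
qed


lemma I_pres_comb:
  assumes XS: "X \<subseteq> S" and vX: "v \<in> X" and sce: "SCE S v"
    and I: "\<forall>w. w \<in> S \<and> w \<notin> X \<longrightarrow> finite (reach (- X) w)"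
    and a: "gadj v a" "a \<notin> X" "finite (reach (- X) a)"
    and b: "gadj v b" "b \<notin> X" "infinite (reach (- X) b)"
  shows "a \<in> S \<and> (\<forall>u. gadj v u \<and> u \<in> S \<and> u \<notin> X \<longrightarrow> u = a)"
proof -
  have red: "redundant S v" using sce unfolding SCE_def erodable_def by simp
  have bS: "b \<notin> S" using I b by blast
  obtain kb where kb: "b = nb v kb" using b(1) by (auto simp: gadj_def)
  obtain ka where ka: "a = nb v ka" using a(1) by (auto simp: gadj_def)
  define ta where "ta = (ka + 6 - kb mod 6) mod 6"
  have at: "a = nb v (kb + ta)" unfolding ka ta_def by (rule nb_offset)
  have ta6: "ta < 6" unfolding ta_def by simp
  have b0: "b = nb v (kb + 0)" using kb by simp
  have b6: "b = nb v (kb + 6)" unfolding kb by (rule nb_eq_mod) simp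
  have ta0: "ta \<noteq> 0"
  proof
    assume "ta = 0" then have "a = b" using at kb by simp
    then show False using a(3) b(3) by simp
  qed
  have conn_contra: False if "\<forall>t. t1 \<le> t \<and> t \<le> t2 \<longrightarrow> nb v (kb + t) \<in> - X" "t1 \<le> t2"
    "(nb v (kb + t1) = b \<and> nb v (kb + t2) = a) \<or> (nb v (kb + t1) = a \<and> nb v (kb + t2) = b)" for t1 t2
  proof -
    have p: "nb v (kb + t2) \<in> reach (- X) (nb v (kb + t1))" using arc_path[OF that(1,2)] unfolding reach_def by simp
    have "b \<in> reach (- X) a" using that(3)
    proof
      assume "nb v (kb + t1) = b \<and> nb v (kb + t2) = a"
      then show ?thesis using p reach_sym by metis
    next
      assume "nb v (kb + t1) = a \<and> nb v (kb + t2) = b"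
      then show ?thesis using p by metis
    qed
    then have "reach (- X) b \<subseteq> reach (- X) a" by (rule reach_trans)
    then show False using a(3) b(3) finite_subset by blast
  qed
  obtain t1 where t1: "0 < t1" "t1 < ta" "nb v (kb + t1) \<in> X"
  proof -
    have "\<exists>t1. 0 < t1 \<and> t1 < ta \<and> nb v (kb + t1) \<in> X"
    proof (rule ccontr)
      assume "\<not> ?thesis"
      then have "\<forall>t. 0 \<le> t \<and> t \<le> ta \<longrightarrow> nb v (kb + t) \<in> - X"
        using a(2) b(2) at b0 by (metis ComplI le_neq_implies_less not_gr_zero)
      from conn_contra[OF this] b0 at show False by simp
    qed
    then show ?thesis using that by blast
  qed
  obtain t2 where t2: "ta < t2" "t2 < 6" "nb v (kb + t2) \<in> X"
  proof -
    have "\<exists>t2. ta < t2 \<and> t2 < 6 \<and> nb v (kb + t2) \<in> X"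
    proof (rule ccontr)
      assume "\<not> ?thesis"
      then have "\<forall>t. ta \<le> t \<and> t \<le> 6 \<longrightarrow> nb v (kb + t) \<in> - X"
        using a(2) b(2) at b6 by (metis ComplI le_neq_implies_less)
      from conn_contra[OF this] b6 at ta6 show False by simp
    qed
    then show ?thesis using that by blast
  qed
  have ES: "nb v (kb + t) \<in> S" if "t1 \<le> t" "t \<le> t2" for t
  proof (rule ccontr)
    assume nt: "nb v (kb + t) \<notin> S"
    have "t \<noteq> t1" "t \<noteq> t2" using nt t1 t2 XS by auto
    then have o: "t1 < t" "t < t2" "t2 < 6" "6 < t1 + 6" using that t1 t2 by auto
    show False
      by (rule no_sep[OF red o, of kb]) (use t1 t2 XS nt b6 bS in auto)
  qed
  have aS: "a \<in> S" using ES[of ta] t1 t2 at by simp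
  have uniq: "u = a" if u: "gadj v u" "u \<in> S" "u \<notin> X" for u
  proof -
    obtain ku where ku: "u = nb v ku" using u(1) by (auto simp: gadj_def)
    define tu where "tu = (ku + 6 - kb mod 6) mod 6"
    have ut: "u = nb v (kb + tu)" unfolding ku tu_def by (rule nb_offset)
    have tu6: "tu < 6" unfolding tu_def by simp
    obtain s0 where win: "\<forall>j'<3. nb v (s0 + j') \<notin> S" using SCE_window[OF sce] by blast
    define w0 where "w0 = (s0 + 6 - kb mod 6) mod 6"
    define w1 where "w1 = (w0 + 1) mod 6"
    define w2 where "w2 = (w0 + 2) mod 6"
    have wn: "nb v (kb + w0) \<notin> S" "nb v (kb + w1) \<notin> S" "nb v (kb + w2) \<notin> S"
    proof -
      have "nb v (s0 + 0) = nb v (kb + ((s0 + 0) + 6 - kb mod 6) mod 6)" by (rule nb_offset)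
      also have "((s0 + 0) + 6 - kb mod 6) mod 6 = w0" unfolding w0_def using window_offset[of s0 0 kb] by simp
      finally have e: "nb v (s0 + 0) = nb v (kb + w0)" .
      show "nb v (kb + w0) \<notin> S" using e win[rule_format, of 0] by simp
      have "nb v (s0 + 1) = nb v (kb + ((s0 + 1) + 6 - kb mod 6) mod 6)" by (rule nb_offset)
      also have "((s0 + 1) + 6 - kb mod 6) mod 6 = w1" unfolding w1_def w0_def by (rule window_offset)
      finally have e: "nb v (s0 + 1) = nb v (kb + w1)" .
      show "nb v (kb + w1) \<notin> S" using e win[rule_format, of 1] by simp
      have "nb v (s0 + 2) = nb v (kb + ((s0 + 2) + 6 - kb mod 6) mod 6)" by (rule nb_offset)
      also have "((s0 + 2) + 6 - kb mod 6) mod 6 = w2" unfolding w2_def w0_def by (rule window_offset)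
      finally have e: "nb v (s0 + 2) = nb v (kb + w2)" .
      show "nb v (kb + w2) \<notin> S" using e win[rule_format, of 2] by simp
    qed
    have w06: "w0 < 6" unfolding w0_def by simp
    have nin: "\<not> (t1 \<le> w \<and> w \<le> t2)" if "nb v (kb + w) \<notin> S" for w
      using ES that by blast
    have tun: "tu \<noteq> t1" "tu \<noteq> t2" using ut u(3) t1 t2 by auto
    have wtu: "w0 \<noteq> tu" "w1 \<noteq> tu" "w2 \<noteq> tu" using wn ut u(2) by auto
    have "tu = ta"
      by (rule comb_arith[OF w06 w1_def w2_def t1(1) t1(2) t2(1) t2(2) tu6 nin nin nin wtu tun])
        (use wn in auto)
    then show "u = a" using ut at by simp
  qed
  show ?thesis using aS uniq by blast
qed


lemma finite_nbs: "finite {y. gadj v y}"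
proof -
  have "{y. gadj v y} = nb v ` {..<6}" unfolding gadj_def by auto
  then show ?thesis by simp
qed

lemma I_pres:
  assumes XS: "X \<subseteq> S" and vX: "v \<in> X" and sce: "SCE S v"
    and I: "\<forall>w. w \<in> S \<and> w \<notin> X \<longrightarrow> finite (reach (- X) w)"
    and X'1: "X \<subseteq> X' \<union> {v}"
    and cond: "(\<exists>u. gadj v u \<and> u \<in> S \<and> u \<notin> X) \<longrightarrow> (\<exists>u. gadj v u \<and> u \<in> S \<and> u \<notin> X \<and> u \<in> X')"
    and w: "w \<in> S" "w \<notin> X" "w \<notin> X'"
  shows "finite (reach (- X') w)"
proof -
  define C where "C = reach (- X) w"
  have Cfin: "finite C" using I w unfolding C_def by blast
  have Cin: "x \<in> - X" if "x \<in> C" for x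
    using reach_in'[OF that[unfolded C_def]] w(2) by simp
  show ?thesis
  proof (cases "\<exists>a. gadj v a \<and> a \<notin> X' \<and> a \<in> C")
    case False
    have "reach (- X') w \<subseteq> C"
    proof
      fix x assume "x \<in> reach (- X') w"
      then have "(w, x) \<in> (Restr gedges (- X'))\<^sup>*" unfolding reach_def by simp
      then show "x \<in> C"
      proof (induction rule: rtrancl_induct)
        case base show ?case unfolding C_def by (rule reach_refl)
      next
        case (step x x')
        then have xx: "gadj x x'" "x \<notin> X'" "x' \<notin> X'" by (auto simp: gedges_def)
        have "x' \<noteq> v"
        proof
          assume "x' = v"
          then have "gadj v x" using xx gadj_sym by simp
          then show False using False xx step.IH by blast
        qed
        then have "x' \<in> - X" using xx X'1 by auto
        moreover have "x \<in> - X" using Cin step.IH by simp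
        ultimately show "x' \<in> C" unfolding C_def using reach_step[OF step.IH[unfolded C_def] _ xx(1)] by simp
      qed
    qed
    then show ?thesis using Cfin finite_subset by blast
  next
    case True
    then obtain a where a: "gadj v a" "a \<notin> X'" "a \<in> C" by blast
    have av: "a \<noteq> v" using a(1) gadj_irrefl by metis
    have aX: "a \<notin> X" using a(2) X'1 av by auto
    have afin: "finite (reach (- X) a)"
      using reach_trans[OF a(3)[unfolded C_def]] Cfin[unfolded C_def] finite_subset by blast
    have allfin: "finite (reach (- X) y)" if "gadj v y" "y \<notin> X'" for y
    proof (rule ccontr)
      assume inf: "infinite (reach (- X) y)"
      have yv: "y \<noteq> v" using that(1) gadj_irrefl by metis
      have yX: "y \<notin> X" using that(2) X'1 yv by auto
      from I_pres_comb[OF XS vX sce I a(1) aX afin that(1) yX inf]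
      have aS: "a \<in> S" and un: "\<forall>u. gadj v u \<and> u \<in> S \<and> u \<notin> X \<longrightarrow> u = a" by auto
      from cond aS a(1) aX obtain u where u: "gadj v u" "u \<in> S" "u \<notin> X" "u \<in> X'" by blast
      then have "u = a" using un by blast
      then show False using u(4) a(2) by simp
    qed
    define Y where "Y = {y. gadj v y \<and> y \<notin> X'}"
    have Yfin: "finite Y" unfolding Y_def using finite_nbs[of v] by (rule finite_subset[rotated]) auto
    define G where "G = C \<union> (\<Union>y\<in>Y. reach (- X) y)"
    have Gfin: "finite G" unfolding G_def using Cfin Yfin allfin unfolding Y_def by auto
    have Gin: "x \<in> - X" if "x \<in> G" for x
    proof -
      from that consider "x \<in> C" | y where "y \<in> Y" "x \<in> reach (- X) y" unfolding G_def by blast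
      then show ?thesis
      proof cases
        case 1 then show ?thesis by (rule Cin)
      next
        case 2
        have yv: "y \<noteq> v" using 2(1) gadj_irrefl[of v] unfolding Y_def by auto
        have "y \<notin> X" using 2(1) X'1 yv unfolding Y_def by auto
        then show ?thesis using reach_in'[OF 2(2)] by simp
      qed
    qed
    have "reach (- X') w \<subseteq> G \<union> {v}"
    proof
      fix x assume "x \<in> reach (- X') w"
      then have "(w, x) \<in> (Restr gedges (- X'))\<^sup>*" unfolding reach_def by simp
      then show "x \<in> G \<union> {v}"
      proof (induction rule: rtrancl_induct)
        case base show ?case unfolding G_def C_def using reach_refl by blast
      next
        case (step x x')
        then have xx: "gadj x x'" "x \<notin> X'" "x' \<notin> X'" by (auto simp: gedges_def)
        show ?case
        proof (cases "x' = v")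
          case True then show ?thesis by simp
        next
          case x'v: False
          then have x'X: "x' \<in> - X" using xx X'1 by auto
          show ?thesis
          proof (cases "x = v")
            case True
            then have "x' \<in> Y" using xx unfolding Y_def by simp
            then show ?thesis unfolding G_def using reach_refl by blast
          next
            case False
            then have xG: "x \<in> G" using step.IH by simp
            have xX: "x \<in> - X" using Gin[OF xG] .
            from xG consider "x \<in> C" | y where "y \<in> Y" "x \<in> reach (- X) y" unfolding G_def by blast
            then show ?thesis
            proof cases
              case 1
              then have "x' \<in> C" unfolding C_def using reach_step[OF _ xX xx(1) x'X] by simp
              then show ?thesis unfolding G_def by simp
            next
              case 2
              then have "x' \<in> reach (- X) y" using reach_step[OF _ xX xx(1) x'X] by simp
              then show ?thesis unfolding G_def using 2(1) by blast
            qed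
          qed
        qed
      qed
    qed
    then show ?thesis using Gfin finite_subset by blast
  qed
qed


lemma ivt:
  assumes "(a, b) \<in> (Restr gedges S)\<^sup>*" "a \<in> S" "hexd z a \<le> i" "i \<le> hexd z b"
  shows "\<exists>x\<in>S. hexd z x = i"
proof -
  have "\<forall>i. hexd z a \<le> i \<and> i \<le> hexd z b \<longrightarrow> (\<exists>x\<in>S. hexd z x = i)"
    using assms(1)
  proof (induction rule: rtrancl_induct)
    case base
    then show ?case using assms(2) by (auto intro: le_antisym)
  next
    case (step b c)
    then have bc: "gadj b c" "c \<in> S" by (auto simp: gedges_def)
    show ?case
    proof (intro allI impI)
      fix i assume i: "hexd z a \<le> i \<and> i \<le> hexd z c"
      show "\<exists>x\<in>S. hexd z x = i"
      proof (cases "i \<le> hexd z b")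
        case True then show ?thesis using step.IH i by blast
      next
        case False
        then have "i = hexd z c" using hexd_adj[OF bc(1), of z] i by simp
        then show ?thesis using bc(2) by blast
      qed
    qed
  qed
  then show ?thesis using assms(3,4) by blast
qed

lemma core:
  assumes XS: "X \<subseteq> S" and vX: "v \<in> X" and sce: "SCE S v"
    and I: "\<forall>w. w \<in> S \<and> w \<notin> X \<longrightarrow> finite (reach (- X) w)"
    and conn: "connected_set (S - {v})"
    and u: "gadj v u" "u \<in> S" "u \<notin> X"
    and z: "z \<in> S" "z \<noteq> v"
    and uniq: "\<forall>x\<in>X. hexd z x = hexd z v \<longrightarrow> x = v"
  shows "hexd z u = hexd z v"
proof (rule ccontr)
  assume ne: "hexd z u \<noteq> hexd z v"
  define i where "i = hexd z v"
  have i1: "i \<ge> 1" using z(2) hexd_zero[of z v] unfolding i_def by (cases "hexd z v") auto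
  have uniq': "\<forall>x\<in>X. hexd z x = i \<longrightarrow> x = v" using uniq unfolding i_def .
  obtain y where y: "gadj v y" "in_outer_face S y"
    using sce unfolding SCE_def erodable_def on_outer_boundary_def by blast
  obtain s0 where win: "\<forall>j'<3. nb v (s0 + j') \<notin> S" using SCE_window[OF sce] by blast
  have KEY: False if "hexd z w = i" "w \<noteq> v" "finite (reach (- X) w)" for w
    using key[OF i1 _ vX XS uniq' that y win u] unfolding i_def by simp
  have adj: "hexd z u \<le> i + 1" "i \<le> hexd z u + 1" using hexd_adj[OF u(1), of z] unfolding i_def by auto
  show False
  proof (cases "hexd z u < i")
    case True
    then have hu: "hexd z u + 1 = i" using adj by simp
    obtain w where w: "gadj u w" "w \<noteq> v" "hexd z w = i"
      using inner_nb[OF i1 _ u(1) hu] unfolding i_def by auto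
    have wX: "w \<notin> X" using uniq' w by blast
    have ufin: "finite (reach (- X) u)" using I u by blast
    have "w \<in> reach (- X) u" using reach_step[OF reach_refl _ w(1)] u(3) wX by simp
    then have "finite (reach (- X) w)" using reach_trans ufin finite_subset by metis
    then show False using KEY w by blast
  next
    case False
    then have hu: "hexd z u = i + 1" using adj ne unfolding i_def by simp
    have zu: "(z, u) \<in> (Restr gedges (S - {v}))\<^sup>*"
    proof -
      have "u \<noteq> v" using u(1) gadj_irrefl by metis
      then show ?thesis using conn z u(2) unfolding connected_set_def by blast
    qed
    have "hexd z z \<le> i" using hexd_zero[of z z] by simp
    from ivt[OF zu _ this] z hu obtain x where x: "x \<in> S - {v}" "hexd z x = i" by auto
    have xX: "x \<notin> X" using uniq' x by blast
    have "finite (reach (- X) x)" using I x xX by blast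
    then show False using KEY x by blast
  qed
qed


lemma ray_dir_int:
  "\<exists>da db. (da, db) \<in> D6 \<and> (\<forall>t::int. t \<ge> 0 \<longrightarrow> hexn (a + t * da) (b + t * db) \<ge> hexn a b)"
proof -
  { assume "a \<ge> 0" "b \<ge> 0"
    then have "\<forall>t::int. t \<ge> 0 \<longrightarrow> hexn (a + t * 1) (b + t * 0) \<ge> hexn a b" unfolding hexn_def by auto
    then have ?thesis unfolding D6_def by blast }
  moreover
  { assume "a \<le> 0" "b \<le> 0"
    then have "\<forall>t::int. t \<ge> 0 \<longrightarrow> hexn (a + t * (-1)) (b + t * 0) \<ge> hexn a b" unfolding hexn_def by auto
    then have ?thesis unfolding D6_def by blast }
  moreover
  { assume "a \<ge> 0" "b \<le> 0" "a \<ge> - b"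
    then have "\<forall>t::int. t \<ge> 0 \<longrightarrow> hexn (a + t * 1) (b + t * 0) \<ge> hexn a b" unfolding hexn_def by auto
    then have ?thesis unfolding D6_def by blast }
  moreover
  { assume "a \<ge> 0" "b \<le> 0" "a \<le> - b"
    then have "\<forall>t::int. t \<ge> 0 \<longrightarrow> hexn (a + t * 0) (b + t * (-1)) \<ge> hexn a b" unfolding hexn_def by auto
    then have ?thesis unfolding D6_def by blast }
  moreover
  { assume "a \<le> 0" "b \<ge> 0" "- a \<ge> b"
    then have "\<forall>t::int. t \<ge> 0 \<longrightarrow> hexn (a + t * (-1)) (b + t * 0) \<ge> hexn a b" unfolding hexn_def by auto
    then have ?thesis unfolding D6_def by blast }
  moreover
  { assume "a \<le> 0" "b \<ge> 0" "- a \<le> b"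
    then have "\<forall>t::int. t \<ge> 0 \<longrightarrow> hexn (a + t * 0) (b + t * 1) \<ge> hexn a b" unfolding hexn_def by auto
    then have ?thesis unfolding D6_def by blast }
  ultimately show ?thesis by (smt (verit))
qed

lemma D6_dirvec: "d \<in> D6 \<Longrightarrow> \<exists>k. dirvec k = d"
  unfolding D6_def using dirvec_vals by auto

lemma ray_outer:
  assumes S: "\<forall>x\<in>S. hexd z x \<le> e" and u: "hexd z u > e"
  shows "in_outer_face S u"
proof -
  define a where "a = fst u - fst z"
  define b where "b = snd u - snd z"
  obtain da db where d: "(da, db) \<in> D6" "\<forall>t::int. t \<ge> 0 \<longrightarrow> hexn (a + t * da) (b + t * db) \<ge> hexn a b"
    using ray_dir_int[of a b] by blast
  obtain k where k: "dirvec k = (da, db)" using D6_dirvec[OF d(1)] by blast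
  define ray where "ray t = (fst u + int t * da, snd u + int t * db)" for t :: nat
  have far: "hexd z (ray t) > e" for t
  proof -
    have "int (hexd z (ray t)) = hexn (a + int t * da) (b + int t * db)"
      unfolding hexd_int ray_def a_def b_def by (simp add: algebra_simps)
    also have "\<dots> \<ge> hexn a b" using d(2) by simp
    also have "hexn a b = int (hexd z u)" unfolding hexd_int a_def b_def by simp
    finally show ?thesis using u by simp
  qed
  have notS: "ray t \<notin> S" for t using far[of t] S by force
  have ray_suc: "ray (Suc t) = nb (ray t) k" for t
    unfolding ray_def nb_def k by (simp add: algebra_simps)
  have inreach: "ray t \<in> reach (- S) u" for t
  proof (induction t)
    case 0 then show ?case unfolding ray_def by (simp add: reach_refl)
  next
    case (Suc t)
    show ?case using reach_step[OF Suc _ _ ] notS ray_suc gadj_nb' by (metis ComplI)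
  qed
  have inj: "inj ray"
  proof (rule injI)
    fix s t assume "ray s = ray t"
    then have "int s * da = int t * db * 0 + int t * da" "int s * db = int t * db"
      unfolding ray_def by auto
    moreover have "da \<noteq> 0 \<or> db \<noteq> 0" using d(1) unfolding D6_def by auto
    ultimately show "s = t" by auto
  qed
  have "infinite (range ray)" using inj by (simp add: finite_image_iff)
  moreover have "range ray \<subseteq> reach (- S) u" using inreach by auto
  ultimately have "infinite (reach (- S) u)" using finite_subset by blast
  moreover have "u \<notin> S" using S u by force
  ultimately show ?thesis by (simp add: outer_reach)
qed

lemma area_ball:
  assumes "finite S" "S \<noteq> {}"
  shows "area S \<subseteq> {x. hexd z x \<le> Max ((\<lambda>u. hexd z u) ` S)}"
proof
  fix x assume x: "x \<in> area S"
  define e where "e = Max ((\<lambda>u. hexd z u) ` S)"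
  have S: "\<forall>y\<in>S. hexd z y \<le> e" unfolding e_def using assms by auto
  show "x \<in> {x. hexd z x \<le> Max ((\<lambda>u. hexd z u) ` S)}"
  proof (rule ccontr)
    assume "x \<notin> {x. hexd z x \<le> Max ((\<lambda>u. hexd z u) ` S)}"
    then have "hexd z x > e" unfolding e_def by simp
    then have "in_outer_face S x" using ray_outer[OF S] by blast
    moreover have "x \<notin> S" using \<open>hexd z x > e\<close> S by force
    ultimately show False using x unfolding area_def by blast
  qed
qed

lemma area_sub: "S \<subseteq> area S" unfolding area_def by auto

lemma infinite_points: "infinite (UNIV :: point set)"
  by (simp add: finite_prod)

lemma hole_to_S:
  assumes h: "h \<in> area S" "h \<notin> S"
  shows "\<exists>s\<in>S. (h, s) \<in> (Restr gedges (area S))\<^sup>*"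
proof -
  define K where "K = reach (- S) h"
  have Kfin: "finite K" using h unfolding K_def area_def outer_reach by auto
  have Kin: "x \<in> - S" if "x \<in> K" for x using reach_in'[OF that[unfolded K_def]] h(2) by simp
  have Karea: "K \<subseteq> area S"
  proof
    fix x assume x: "x \<in> K"
    have "reach (- S) x \<subseteq> K" using reach_trans x unfolding K_def by blast
    then have "finite (reach (- S) x)" using Kfin finite_subset by blast
    then show "x \<in> area S" using Kin[OF x] unfolding area_def outer_reach by auto
  qed
  have "\<exists>k\<in>K. \<exists>s\<in>S. gadj k s"
  proof (rule ccontr)
    assume no: "\<not> ?thesis"
    have "x \<in> K" for x
    proof -
      have "(h, x) \<in> gedges ^^ (hexd h x)" by (rule path_hexd)
      moreover have "(h, y) \<in> gedges ^^ n \<Longrightarrow> y \<in> K" for n y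
      proof (induction n arbitrary: y)
        case 0 then show ?case unfolding K_def by (simp add: reach_refl)
      next
        case (Suc n)
        then obtain y0 where y0: "(h, y0) \<in> gedges ^^ n" "(y0, y) \<in> gedges" by auto
        then have y0K: "y0 \<in> K" using Suc.IH by blast
        have "gadj y0 y" using y0 by (simp add: gedges_def)
        then have "y \<notin> S" using no y0K by blast
        then show ?case unfolding K_def using reach_step[OF y0K[unfolded K_def] Kin[OF y0K] \<open>gadj y0 y\<close>] by simp
      qed
      ultimately show "x \<in> K" by blast
    qed
    then have "K = UNIV" by auto
    then show False using Kfin infinite_points by simp
  qed
  then obtain k s where ks: "k \<in> K" "s \<in> S" "gadj k s" by blast
  have "(h, y) \<in> (Restr gedges (area S))\<^sup>*" if "y \<in> K" for y
  proof -
    have "(h, y) \<in> (Restr gedges (- S))\<^sup>*" using that unfolding K_def reach_def by simp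
    then show ?thesis
    proof (induction rule: rtrancl_induct)
      case base then show ?case by simp
    next
      case (step y y')
      have "y \<in> K" "y' \<in> K"
        using step(1,2) unfolding K_def reach_def by (auto intro: rtrancl_into_rtrancl)
      then have "(y, y') \<in> Restr gedges (area S)" using step(2) Karea by auto
      then show ?case using step(3) by (rule rtrancl_into_rtrancl[rotated])
    qed
  qed
  from this[OF ks(1)] have "(h, k) \<in> (Restr gedges (area S))\<^sup>*" .
  moreover have "(k, s) \<in> Restr gedges (area S)" using ks Karea area_sub by (auto simp: gedges_def)
  ultimately show ?thesis using ks(2) by (meson rtrancl_into_rtrancl)
qed

lemma area_connected:
  assumes "connected_set S"
  shows "connected_set (area S)"
  unfolding connected_set_def
proof (intro ballI)
  have SS: "(a, b) \<in> (Restr gedges (area S))\<^sup>*" if "a \<in> S" "b \<in> S" for a b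
  proof -
    have "(a, b) \<in> (Restr gedges S)\<^sup>*" using assms that unfolding connected_set_def by blast
    then show ?thesis using Restr_mono_rtrancl[OF area_sub] by blast
  qed
  have toS: "\<exists>s\<in>S. (a, s) \<in> (Restr gedges (area S))\<^sup>*" if "a \<in> area S" for a
  proof (cases "a \<in> S")
    case True then show ?thesis by blast
  next
    case False then show ?thesis using hole_to_S[OF that] by blast
  qed
  fix a b assume "a \<in> area S" "b \<in> area S"
  then obtain sa sb where "sa \<in> S" "(a, sa) \<in> (Restr gedges (area S))\<^sup>*"
    "sb \<in> S" "(b, sb) \<in> (Restr gedges (area S))\<^sup>*" using toS by blast
  then show "(a, b) \<in> (Restr gedges (area S))\<^sup>*"
    using SS Restr_sym by (meson rtrancl_trans)
qed


definition heads :: "'p set \<Rightarrow> 'p conf \<Rightarrow> point set" where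
  "heads P C = {x. \<exists>p\<in>P. pos C p = Contr x \<or> (\<exists>t. pos C p = Exp x t)}"

definition Xset :: "'p set \<Rightarrow> 'p conf \<Rightarrow> point set" where
  "Xset P C = elig C \<inter> occupied P C"

definition inv_tail :: "'p set \<Rightarrow> 'p conf \<Rightarrow> bool" where
  "inv_tail P C \<longleftrightarrow> (\<forall>p\<in>P. \<forall>h t. pos C p = Exp h t \<longrightarrow> t \<notin> elig C)"

definition inv_disj :: "'p set \<Rightarrow> 'p conf \<Rightarrow> bool" where
  "inv_disj P C \<longleftrightarrow> (\<forall>p\<in>P. \<forall>q\<in>P. p \<noteq> q \<longrightarrow> occ_pts (pos C p) \<inter> occ_pts (pos C q) = {})"

definition inv_term :: "'p set \<Rightarrow> 'p conf \<Rightarrow> bool" where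
  "inv_term P C \<longleftrightarrow> (\<forall>p\<in>P. terminated C p \<longrightarrow> (\<exists>x. pos C p = Contr x))"

definition inv_und :: "'p set \<Rightarrow> 'p conf \<Rightarrow> bool" where
  "inv_und P C \<longleftrightarrow> (\<forall>p\<in>P. stat C p = Undecided \<longrightarrow>
      (\<forall>x. pos C p = Contr x \<longrightarrow> x \<in> elig C) \<and> (\<forall>h t. pos C p = Exp h t \<longrightarrow> h \<in> elig C))"

definition inv_lead :: "'p set \<Rightarrow> 'p conf \<Rightarrow> bool" where
  "inv_lead P C \<longleftrightarrow> (\<forall>p\<in>P. stat C p = Leader \<longrightarrow> (\<exists>x. pos C p = Contr x \<and> x \<in> elig C))"

definition inv_area :: "'p set \<Rightarrow> point set \<Rightarrow> 'p conf \<Rightarrow> bool" where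
  "inv_area P S0 C \<longleftrightarrow> elig C \<subseteq> area S0 \<and> occupied P C \<subseteq> area S0"

definition inv_I :: "'p set \<Rightarrow> 'p conf \<Rightarrow> bool" where
  "inv_I P C \<longleftrightarrow> (\<forall>w. w \<in> elig C \<and> w \<notin> Xset P C \<longrightarrow> finite (reach (- Xset P C) w))"

definition inv_J :: "'p set \<Rightarrow> point set \<Rightarrow> 'p conf \<Rightarrow> bool" where
  "inv_J P S0 C \<longleftrightarrow> (\<forall>z\<in>elig C. \<forall>i. (\<exists>x\<in>heads P C. hexd z x \<le> i) \<and> i \<le> eccentricity S0 z
      \<longrightarrow> (\<exists>x\<in>heads P C. hexd z x = i))"

definition dinv :: "'p set \<Rightarrow> point set \<Rightarrow> 'p conf \<Rightarrow> bool" where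
  "dinv P S0 C \<longleftrightarrow> inv_tail P C \<and> inv_disj P C \<and> inv_term P C \<and> inv_und P C \<and> inv_lead P C \<and>
     inv_area P S0 C \<and> connected_set (elig C) \<and> inv_I P C \<and> inv_J P S0 C"

fun hdl :: "loc \<Rightarrow> point" where
  "hdl (Contr x) = x"
| "hdl (Exp h t) = h"

lemma hdl_iff: "(l = Contr x \<or> (\<exists>t. l = Exp x t)) \<longleftrightarrow> hdl l = x"
  by (cases l) auto

lemma heads_img: "heads P C = (\<lambda>p. hdl (pos C p)) ` P"
  unfolding heads_def hdl_iff by blast

lemma occupied_iff: "x \<in> occupied P C \<longleftrightarrow> (\<exists>p\<in>P. x \<in> occ_pts (pos C p))"
  unfolding occupied_def by blast

lemma occ_pts_cases: "x \<in> occ_pts l \<longleftrightarrow> (\<exists>y. l = Contr y \<and> x = y) \<or> (\<exists>h t. l = Exp h t \<and> (x = h \<or> x = t))"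
  by (cases l) auto

lemma X_heads:
  assumes "inv_tail P C" "x \<in> Xset P C"
  shows "x \<in> heads P C"
proof -
  from assms(2) have xe: "x \<in> elig C" and "x \<in> occupied P C" unfolding Xset_def by auto
  then obtain p where p: "p \<in> P" "x \<in> occ_pts (pos C p)" unfolding occupied_iff by blast
  show ?thesis
  proof (cases "pos C p")
    case (Contr y) then show ?thesis using p unfolding heads_def by auto
  next
    case (Exp h t)
    then have "x = h \<or> x = t" using p by simp
    moreover have "t \<notin> elig C" using assms(1) p Exp unfolding inv_tail_def by blast
    ultimately have "x = h" using xe by auto
    then show ?thesis using p(1) Exp unfolding heads_def by blast
  qed
qed

lemma heads_occupied: "heads P C \<subseteq> occupied P C"
proof
  fix x assume "x \<in> heads P C"
  then obtain p where p: "p \<in> P" "pos C p = Contr x \<or> (\<exists>t. pos C p = Exp x t)" unfolding heads_def by blast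
  then have "x \<in> occ_pts (pos C p)" by auto
  then show "x \<in> occupied P C" using p(1) unfolding occupied_iff by blast
qed

lemma dinv_contract:
  assumes dinv: "dinv P S0 C" and p: "p \<in> P" and ph: "pos C p = Exp h t"
  shows "dinv P S0 (C\<lparr>pos := (pos C)(p := Contr h)\<rparr>)"
proof -
  define C' where "C' = C\<lparr>pos := (pos C)(p := Contr h)\<rparr>"
  have sel: "elig C' = elig C" "stat C' = stat C" "terminated C' = terminated C"
    "pos C' = (pos C)(p := Contr h)" unfolding C'_def by simp_all
  from dinv have tl: "inv_tail P C" and dj: "inv_disj P C" and tm: "inv_term P C" and ud: "inv_und P C"
    and ld: "inv_lead P C" and ar: "inv_area P S0 C" and cn: "connected_set (elig C)"
    and I: "inv_I P C" and J: "inv_J P S0 C" unfolding dinv_def by auto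
  have tnE: "t \<notin> elig C" using tl p ph unfolding inv_tail_def by blast
  have occsub: "occ_pts (pos C' q) \<subseteq> occ_pts (pos C q)" for q using ph by (simp add: sel)
  have occ': "occupied P C' \<subseteq> occupied P C"
  proof
    fix x assume "x \<in> occupied P C'"
    then obtain q where "q \<in> P" "x \<in> occ_pts (pos C' q)" unfolding occupied_iff by blast
    then show "x \<in> occupied P C" using occsub[of q] unfolding occupied_iff by blast
  qed
  have X': "Xset P C' = Xset P C"
  proof
    show "Xset P C' \<subseteq> Xset P C" using occ' unfolding Xset_def sel by auto
    show "Xset P C \<subseteq> Xset P C'"
    proof
      fix x assume x: "x \<in> Xset P C"
      then have xe: "x \<in> elig C" unfolding Xset_def by simp
      from x have "x \<in> occupied P C" unfolding Xset_def by simp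
      then obtain q where q: "q \<in> P" "x \<in> occ_pts (pos C q)" unfolding occupied_iff by blast
      have xq: "x \<in> occ_pts (pos C' q)"
      proof (cases "q = p")
        case True
        then have "x = h \<or> x = t" using q ph by simp
        then have "x = h" using xe tnE by auto
        then show ?thesis using True by (simp add: sel)
      next
        case False then show ?thesis using q by (simp add: sel)
      qed
      have "x \<in> occupied P C'" unfolding occupied_iff using q(1) xq by blast
      then show "x \<in> Xset P C'" using xe unfolding Xset_def sel by blast
    qed
  qed
  have H': "heads P C' = heads P C"
    unfolding heads_img sel using ph by (intro image_cong) auto
  have "inv_tail P C'" using tl unfolding inv_tail_def sel by auto
  moreover have "inv_disj P C'" using dj occsub unfolding inv_disj_def by blast
  moreover have "inv_term P C'" using tm unfolding inv_term_def sel by auto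
  moreover have "inv_und P C'" using ud ph unfolding inv_und_def sel by auto
  moreover have "inv_lead P C'"
  proof -
    have "stat C p \<noteq> Leader" using ld p ph unfolding inv_lead_def by auto
    then show ?thesis using ld unfolding inv_lead_def sel by auto
  qed
  moreover have "inv_area P S0 C'" using ar occ' unfolding inv_area_def sel by auto
  moreover have "connected_set (elig C')" using cn sel by simp
  moreover have "inv_I P C'" using I X' unfolding inv_I_def sel by simp
  moreover have "inv_J P S0 C'" using J H' unfolding inv_J_def sel by simp
  ultimately show ?thesis unfolding dinv_def C'_def by simp
qed

lemma dinv_terminate:
  assumes dinv: "dinv P S0 C" and ph: "pos C p = Contr v"
  shows "dinv P S0 (C\<lparr>terminated := (terminated C)(p := True)\<rparr>)"
proof -
  define C' where "C' = C\<lparr>terminated := (terminated C)(p := True)\<rparr>"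
  have sel: "pos C' = pos C" "elig C' = elig C" "stat C' = stat C" "terminated C' = (terminated C)(p := True)"
    unfolding C'_def by simp_all
  have occ: "occupied P C' = occupied P C" unfolding occupied_def sel ..
  have X: "Xset P C' = Xset P C" unfolding Xset_def occ sel ..
  have H: "heads P C' = heads P C" unfolding heads_def sel ..
  from dinv have tl: "inv_tail P C" and dj: "inv_disj P C" and tm: "inv_term P C" and ud: "inv_und P C"
    and ld: "inv_lead P C" and ar: "inv_area P S0 C" and cn: "connected_set (elig C)"
    and I: "inv_I P C" and J: "inv_J P S0 C" unfolding dinv_def by auto
  have "inv_term P C'" unfolding inv_term_def sel
  proof (intro ballI impI)
    fix q assume "q \<in> P" "((terminated C)(p := True)) q"
    then show "\<exists>x. pos C q = Contr x" using tm ph unfolding inv_term_def by (cases "q = p") auto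
  qed
  moreover have "inv_tail P C'" using tl by (simp only: inv_tail_def sel)
  moreover have "inv_disj P C'" using dj by (simp only: inv_disj_def sel)
  moreover have "inv_und P C'" using ud by (simp only: inv_und_def sel)
  moreover have "inv_lead P C'" using ld by (simp only: inv_lead_def sel)
  moreover have "inv_area P S0 C'" using ar by (simp only: inv_area_def sel occ)
  moreover have "connected_set (elig C')" using cn by (simp only: sel)
  moreover have "inv_I P C'" using I by (simp only: inv_I_def sel X)
  moreover have "inv_J P S0 C'" using J by (simp only: inv_J_def sel H)
  ultimately show ?thesis unfolding dinv_def C'_def by blast
qed

lemma dinv_leader:
  assumes dinv: "dinv P S0 C" and p: "p \<in> P" and ph: "pos C p = Contr v" and u: "stat C p = Undecided"
  shows "dinv P S0 (C\<lparr>stat := (stat C)(p := Leader)\<rparr>)"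
proof -
  define C' where "C' = C\<lparr>stat := (stat C)(p := Leader)\<rparr>"
  have sel: "pos C' = pos C" "elig C' = elig C" "stat C' = (stat C)(p := Leader)" "terminated C' = terminated C"
    unfolding C'_def by simp_all
  have occ: "occupied P C' = occupied P C" unfolding occupied_def sel ..
  have X: "Xset P C' = Xset P C" unfolding Xset_def occ sel ..
  have H: "heads P C' = heads P C" unfolding heads_def sel ..
  from dinv have tl: "inv_tail P C" and dj: "inv_disj P C" and tm: "inv_term P C" and ud: "inv_und P C"
    and ld: "inv_lead P C" and ar: "inv_area P S0 C" and cn: "connected_set (elig C)"
    and I: "inv_I P C" and J: "inv_J P S0 C" unfolding dinv_def by auto
  have ve: "v \<in> elig C" using ud p ph u unfolding inv_und_def by blast
  have "inv_und P C'" unfolding inv_und_def sel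
  proof (intro ballI impI)
    fix q assume "q \<in> P" "((stat C)(p := Leader)) q = Undecided"
    then show "(\<forall>x. pos C q = Contr x \<longrightarrow> x \<in> elig C) \<and> (\<forall>h t. pos C q = Exp h t \<longrightarrow> h \<in> elig C)"
      using ud unfolding inv_und_def by (cases "q = p") auto
  qed
  moreover have "inv_lead P C'" unfolding inv_lead_def sel
  proof (intro ballI impI)
    fix q assume "q \<in> P" "((stat C)(p := Leader)) q = Leader"
    then show "\<exists>x. pos C q = Contr x \<and> x \<in> elig C"
      using ld ph ve unfolding inv_lead_def by (cases "q = p") auto
  qed
  moreover have "inv_tail P C'" using tl by (simp only: inv_tail_def sel)
  moreover have "inv_disj P C'" using dj by (simp only: inv_disj_def sel)
  moreover have "inv_term P C'" using tm by (simp only: inv_term_def sel)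
  moreover have "inv_area P S0 C'" using ar by (simp only: inv_area_def sel occ)
  moreover have "connected_set (elig C')" using cn by (simp only: sel)
  moreover have "inv_I P C'" using I by (simp only: inv_I_def sel X)
  moreover have "inv_J P S0 C'" using J by (simp only: inv_J_def sel H)
  ultimately show ?thesis unfolding dinv_def C'_def by blast
qed


declare split_paired_All[simp del] split_paired_Ex[simp del]

lemma J_expand:
  assumes J: "\<forall>z\<in>S. \<forall>i. (\<exists>x\<in>H. hexd z x \<le> i) \<and> i \<le> E z \<longrightarrow> (\<exists>x\<in>H. hexd z x = i)"
    and H1: "H - {v} \<subseteq> H'" and H2: "H' \<subseteq> H \<union> {u}" and uH: "u \<in> H'" and vH: "v \<in> H"
    and core: "\<forall>z\<in>S - {v}. (\<forall>x\<in>H. x \<noteq> v \<longrightarrow> hexd z x \<noteq> hexd z v) \<longrightarrow> hexd z u = hexd z v"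
    and adj: "gadj v u"
  shows "\<forall>z\<in>S - {v}. \<forall>i. (\<exists>x\<in>H'. hexd z x \<le> i) \<and> i \<le> E z \<longrightarrow> (\<exists>x\<in>H'. hexd z x = i)"
proof (intro ballI allI impI)
  fix z i assume z: "z \<in> S - {v}" and hi: "(\<exists>x\<in>H'. hexd z x \<le> i) \<and> i \<le> E z"
  have keep: "\<exists>x\<in>H'. hexd z x = k" if "\<exists>x\<in>H. hexd z x = k" for k
  proof -
    from that obtain x where x: "x \<in> H" "hexd z x = k" by blast
    show ?thesis
    proof (cases "x = v")
      case False then show ?thesis using x H1 by blast
    next
      case True
      show ?thesis
      proof (cases "\<exists>x'\<in>H. x' \<noteq> v \<and> hexd z x' = hexd z v")
        case True
        then obtain x' where "x' \<in> H" "x' \<noteq> v" "hexd z x' = hexd z v" by blast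
        then show ?thesis using H1 x \<open>x = v\<close> by blast
      next
        case False
        then have "hexd z u = hexd z v" using core z by blast
        then show ?thesis using uH x \<open>x = v\<close> by auto
      qed
    qed
  qed
  from hi obtain x where x: "x \<in> H'" "hexd z x \<le> i" and iE: "i \<le> E z" by blast
  have zS: "z \<in> S" using z by simp
  show "\<exists>x\<in>H'. hexd z x = i"
  proof (cases "x \<in> H")
    case True then show ?thesis using J zS x iE keep by blast
  next
    case False
    then have xu: "x = u" using x H2 by auto
    show ?thesis
    proof (cases "hexd z v \<le> i")
      case True then show ?thesis using J zS vH iE keep by blast
    next
      case False
      then have "hexd z u = i" using hexd_adj[OF adj, of z] x xu by simp
      then show ?thesis using uH by blast
    qed
  qed
qed


lemma SCE_v: "SCE S v \<Longrightarrow> v \<in> S"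
  unfolding SCE_def erodable_def redundant_def by simp

lemma SCE_red: "SCE S v \<Longrightarrow> redundant S v"
  unfolding SCE_def erodable_def by simp

lemma dinv_expand:
  assumes dinv: "dinv P S0 C" and p: "p \<in> P" and ph: "pos C p = Contr v" and und: "stat C p = Undecided"
    and nt: "\<not> terminated C p" and sce: "SCE (elig C) v" and vu: "gadj v u"
    and uo: "u \<notin> occupied P C" and ue: "u \<in> elig C - {v}"
  shows "dinv P S0 (C\<lparr>pos := (pos C)(p := Exp u v), elig := elig C - {v}\<rparr>)"
proof -
  define C' where "C' = C\<lparr>pos := (pos C)(p := Exp u v), elig := elig C - {v}\<rparr>"
  have sel: "pos C' = (pos C)(p := Exp u v)" "elig C' = elig C - {v}" "stat C' = stat C"
    "terminated C' = terminated C" unfolding C'_def by simp_all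
  from dinv have tl: "inv_tail P C" and dj: "inv_disj P C" and tm: "inv_term P C" and ud: "inv_und P C"
    and ld: "inv_lead P C" and ar: "inv_area P S0 C" and cn: "connected_set (elig C)"
    and I: "inv_I P C" and J: "inv_J P S0 C" unfolding dinv_def by auto
  have vocc: "v \<in> occupied P C" using p ph unfolding occupied_iff by force
  have ve: "v \<in> elig C" using SCE_v[OF sce] .
  have vq: "v \<notin> occ_pts (pos C q)" if "q \<in> P" "q \<noteq> p" for q
    using dj p that ph unfolding inv_disj_def by fastforce
  have uq: "u \<notin> occ_pts (pos C q)" if "q \<in> P" for q using uo that unfolding occupied_iff by blast
  have occ': "occupied P C' = occupied P C \<union> {u}"
  proof
    show "occupied P C' \<subseteq> occupied P C \<union> {u}"
    proof
      fix x assume "x \<in> occupied P C'"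
      then obtain q where q: "q \<in> P" "x \<in> occ_pts (pos C' q)" unfolding occupied_iff by blast
      show "x \<in> occupied P C \<union> {u}"
      proof (cases "q = p")
        case True then show ?thesis using q vocc by (auto simp: sel)
      next
        case False
        then have "x \<in> occ_pts (pos C q)" using q by (simp add: sel)
        then have "x \<in> occupied P C" using q(1) unfolding occupied_iff by blast
        then show ?thesis by simp
      qed
    qed
    show "occupied P C \<union> {u} \<subseteq> occupied P C'"
    proof
      fix x assume "x \<in> occupied P C \<union> {u}"
      then consider "x = u" | q where "q \<in> P" "x \<in> occ_pts (pos C q)" unfolding Un_iff singleton_iff occupied_iff by blast
      then show "x \<in> occupied P C'"
      proof cases
        case 1 then show ?thesis using p unfolding occupied_iff by (force simp: sel)
      next
        case 2
        show ?thesis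
        proof (cases "q = p")
          case True then have "x = v" using 2 ph by simp
          then show ?thesis using p unfolding occupied_iff by (force simp: sel)
        next
          case False then show ?thesis using 2 unfolding occupied_iff by (force simp: sel)
        qed
      qed
    qed
  qed
  have c1: "inv_tail P C'" unfolding inv_tail_def
  proof (intro ballI allI impI)
    fix q h t assume q: "q \<in> P" "pos C' q = Exp h t"
    show "t \<notin> elig C'"
    proof (cases "q = p")
      case True then show ?thesis using q by (simp add: sel)
    next
      case False
      then have "pos C q = Exp h t" using q by (simp add: sel)
      then have "t \<notin> elig C" using tl q(1) unfolding inv_tail_def by blast
      then show ?thesis by (simp add: sel)
    qed
  qed
  have c2: "inv_disj P C'" unfolding inv_disj_def
  proof (intro ballI impI)
    fix q1 q2 assume q: "q1 \<in> P" "q2 \<in> P" "q1 \<noteq> q2"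
    show "occ_pts (pos C' q1) \<inter> occ_pts (pos C' q2) = {}"
    proof (cases "q1 = p")
      case True then show ?thesis using q vq uq by (auto simp: sel)
    next
      case False
      show ?thesis
      proof (cases "q2 = p")
        case True then show ?thesis using q vq uq False by (auto simp: sel)
      next
        case False2: False then show ?thesis using q dj False unfolding inv_disj_def by (simp add: sel)
      qed
    qed
  qed
  have c3: "inv_term P C'" unfolding inv_term_def
  proof (intro ballI impI)
    fix q assume q: "q \<in> P" "terminated C' q"
    then have tq: "terminated C q" by (simp add: sel)
    then have qp: "q \<noteq> p" using nt by auto
    then have "\<exists>x. pos C q = Contr x" using q(1) tq tm unfolding inv_term_def by blast
    then show "\<exists>x. pos C' q = Contr x" using qp by (simp add: sel)
  qed
  have hx: "x \<noteq> v" if "q \<in> P" "q \<noteq> p" "pos C q = Contr x \<or> (\<exists>t. pos C q = Exp x t)" for q x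
    using vq[OF that(1,2)] that(3) by auto
  have c4: "inv_und P C'" unfolding inv_und_def
  proof (intro ballI impI)
    fix q assume q: "q \<in> P" "stat C' q = Undecided"
    show "(\<forall>x. pos C' q = Contr x \<longrightarrow> x \<in> elig C') \<and> (\<forall>h t. pos C' q = Exp h t \<longrightarrow> h \<in> elig C')"
    proof (cases "q = p")
      case True then show ?thesis using ue by (simp add: sel)
    next
      case False
      then show ?thesis using q ud hx[OF q(1) False] unfolding inv_und_def by (auto simp: sel)
    qed
  qed
  have c5: "inv_lead P C'" unfolding inv_lead_def
  proof (intro ballI impI)
    fix q assume q: "q \<in> P" "stat C' q = Leader"
    then have qp: "q \<noteq> p" using und by (auto simp: sel)
    then show "\<exists>x. pos C' q = Contr x \<and> x \<in> elig C'"
      using q ld hx[OF q(1) qp] unfolding inv_lead_def by (auto simp: sel)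
  qed
  have c6: "inv_area P S0 C'" using ar ue unfolding inv_area_def occ' sel by auto
  have c7: "connected_set (elig C')" unfolding sel by (rule remove_redundant[OF cn SCE_red[OF sce]])
  have XS: "Xset P C \<subseteq> elig C" unfolding Xset_def by auto
  have vX: "v \<in> Xset P C" unfolding Xset_def using ve vocc by simp
  have Iold: "\<forall>w. w \<in> elig C \<and> w \<notin> Xset P C \<longrightarrow> finite (reach (- Xset P C) w)"
    using I unfolding inv_I_def .
  have X'1: "Xset P C \<subseteq> Xset P C' \<union> {v}" unfolding Xset_def occ' sel by auto
  have uX': "u \<in> Xset P C'" unfolding Xset_def occ' sel using ue by simp
  have uX: "u \<notin> Xset P C" unfolding Xset_def using uo by simp
  have cond: "(\<exists>u. gadj v u \<and> u \<in> elig C \<and> u \<notin> Xset P C) \<longrightarrow> (\<exists>u. gadj v u \<and> u \<in> elig C \<and> u \<notin> Xset P C \<and> u \<in> Xset P C')"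
    using vu ue uX uX' by blast
  have c8: "inv_I P C'" unfolding inv_I_def
  proof (intro allI impI)
    fix w assume w: "w \<in> elig C' \<and> w \<notin> Xset P C'"
    then have we: "w \<in> elig C" "w \<noteq> v" by (auto simp: sel)
    have wX: "w \<notin> Xset P C" using w we X'1 by auto
    show "finite (reach (- Xset P C') w)"
      by (rule I_pres[OF XS vX sce Iold X'1 cond we(1) wX]) (use w in simp)
  qed
  have Hs: "heads P C - {v} \<subseteq> heads P C'" "heads P C' \<subseteq> heads P C \<union> {u}" "u \<in> heads P C'" "v \<in> heads P C"
  proof -
    show "heads P C - {v} \<subseteq> heads P C'"
    proof
      fix x assume "x \<in> heads P C - {v}"
      then obtain q where q: "q \<in> P" "x = hdl (pos C q)" "x \<noteq> v" unfolding heads_img by blast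
      then have "q \<noteq> p" using ph by auto
      then show "x \<in> heads P C'" using q unfolding heads_img by (auto simp: sel)
    qed
    show "heads P C' \<subseteq> heads P C \<union> {u}" unfolding heads_img by (auto simp: sel)
    show "u \<in> heads P C'" unfolding heads_img using p by (force simp: sel)
    show "v \<in> heads P C" unfolding heads_img using p ph by force
  qed
  have conn': "connected_set (elig C - {v})" by (rule remove_redundant[OF cn SCE_red[OF sce]])
  have coreH: "\<forall>z\<in>elig C - {v}. (\<forall>x\<in>heads P C. x \<noteq> v \<longrightarrow> hexd z x \<noteq> hexd z v) \<longrightarrow> hexd z u = hexd z v"
  proof (intro ballI impI)
    fix z assume z: "z \<in> elig C - {v}" and un: "\<forall>x\<in>heads P C. x \<noteq> v \<longrightarrow> hexd z x \<noteq> hexd z v"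
    have uniq: "\<forall>x\<in>Xset P C. hexd z x = hexd z v \<longrightarrow> x = v"
      using un X_heads[OF tl] by blast
    show "hexd z u = hexd z v"
      by (rule core[OF XS vX sce Iold conn' vu _ uX _ _ uniq]) (use ue z in auto)
  qed
  have c9: "inv_J P S0 C'" unfolding inv_J_def sel
    using J_expand[OF J[unfolded inv_J_def] Hs coreH vu] .
  show ?thesis using c1 c2 c3 c4 c5 c6 c7 c8 c9 unfolding dinv_def C'_def by blast
qed


declare split_paired_All[simp del] split_paired_Ex[simp del]

lemma dinv_follower:
  assumes dinv: "dinv P S0 C" and p: "p \<in> P" and ph: "pos C p = Contr v" and und: "stat C p = Undecided"
    and sce: "SCE (elig C) v"
    and nou: "\<not> (\<exists>u. gadj v u \<and> u \<notin> occupied P C \<and> u \<in> elig C - {v})"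
  shows "dinv P S0 (C\<lparr>stat := (stat C)(p := Follower), elig := elig C - {v}\<rparr>)"
proof -
  define C' where "C' = C\<lparr>stat := (stat C)(p := Follower), elig := elig C - {v}\<rparr>"
  have sel: "pos C' = pos C" "elig C' = elig C - {v}" "stat C' = (stat C)(p := Follower)"
    "terminated C' = terminated C" unfolding C'_def by simp_all
  from dinv have tl: "inv_tail P C" and dj: "inv_disj P C" and tm: "inv_term P C" and ud: "inv_und P C"
    and ld: "inv_lead P C" and ar: "inv_area P S0 C" and cn: "connected_set (elig C)"
    and I: "inv_I P C" and J: "inv_J P S0 C" unfolding dinv_def by auto
  have occ: "occupied P C' = occupied P C" unfolding occupied_def sel ..
  have H: "heads P C' = heads P C" unfolding heads_def sel ..
  have X': "Xset P C' = Xset P C - {v}" unfolding Xset_def occ sel by auto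
  have vocc: "v \<in> occupied P C" using p ph unfolding occupied_iff by force
  have ve: "v \<in> elig C" using SCE_v[OF sce] .
  have vq: "v \<notin> occ_pts (pos C q)" if "q \<in> P" "q \<noteq> p" for q
    using dj p that ph unfolding inv_disj_def by fastforce
  have hx: "x \<noteq> v" if "q \<in> P" "q \<noteq> p" "pos C q = Contr x \<or> (\<exists>t. pos C q = Exp x t)" for q x
    using vq[OF that(1,2)] that(3) by auto
  have c1: "inv_tail P C'" using tl unfolding inv_tail_def sel by blast
  have c2: "inv_disj P C'" using dj unfolding inv_disj_def sel .
  have c3: "inv_term P C'" using tm unfolding inv_term_def sel .
  have c4: "inv_und P C'" unfolding inv_und_def
  proof (intro ballI impI)
    fix q assume q: "q \<in> P" "stat C' q = Undecided"
    then have qp: "q \<noteq> p" by (auto simp: sel)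
    then have "stat C q = Undecided" using q by (simp add: sel)
    then show "(\<forall>x. pos C' q = Contr x \<longrightarrow> x \<in> elig C') \<and> (\<forall>h t. pos C' q = Exp h t \<longrightarrow> h \<in> elig C')"
      using q(1) ud hx[OF q(1) qp] unfolding inv_und_def by (auto simp: sel)
  qed
  have c5: "inv_lead P C'" unfolding inv_lead_def
  proof (intro ballI impI)
    fix q assume q: "q \<in> P" "stat C' q = Leader"
    then have qp: "q \<noteq> p" by (auto simp: sel)
    then have "stat C q = Leader" using q by (simp add: sel)
    then show "\<exists>x. pos C' q = Contr x \<and> x \<in> elig C'"
      using q(1) ld hx[OF q(1) qp] unfolding inv_lead_def by (auto simp: sel)
  qed
  have c6: "inv_area P S0 C'" using ar unfolding inv_area_def occ sel by auto
  have c7: "connected_set (elig C')" unfolding sel by (rule remove_redundant[OF cn SCE_red[OF sce]])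
  have XS: "Xset P C \<subseteq> elig C" unfolding Xset_def by auto
  have vX: "v \<in> Xset P C" unfolding Xset_def using ve vocc by simp
  have Iold: "\<forall>w. w \<in> elig C \<and> w \<notin> Xset P C \<longrightarrow> finite (reach (- Xset P C) w)"
    using I unfolding inv_I_def .
  have X'1: "Xset P C \<subseteq> Xset P C' \<union> {v}" unfolding X' by auto
  have cond: "(\<exists>u. gadj v u \<and> u \<in> elig C \<and> u \<notin> Xset P C) \<longrightarrow> (\<exists>u. gadj v u \<and> u \<in> elig C \<and> u \<notin> Xset P C \<and> u \<in> Xset P C')"
  proof
    assume "\<exists>u. gadj v u \<and> u \<in> elig C \<and> u \<notin> Xset P C"
    then obtain u where u: "gadj v u" "u \<in> elig C" "u \<notin> Xset P C" by blast
    have "u \<noteq> v" using u(1) gadj_irrefl by metis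
    moreover have "u \<notin> occupied P C" using u unfolding Xset_def by simp
    ultimately show "\<exists>u. gadj v u \<and> u \<in> elig C \<and> u \<notin> Xset P C \<and> u \<in> Xset P C'" using nou u by blast
  qed
  have c8: "inv_I P C'" unfolding inv_I_def
  proof (intro allI impI)
    fix w assume w: "w \<in> elig C' \<and> w \<notin> Xset P C'"
    then have we: "w \<in> elig C" "w \<noteq> v" by (auto simp: sel)
    have wX: "w \<notin> Xset P C" using w we unfolding X' by auto
    show "finite (reach (- Xset P C') w)"
      by (rule I_pres[OF XS vX sce Iold X'1 cond we(1) wX]) (use w in simp)
  qed
  have c9: "inv_J P S0 C'" using J unfolding inv_J_def H sel by blast
  show ?thesis using c1 c2 c3 c4 c5 c6 c7 c8 c9 unfolding dinv_def C'_def by blast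
qed

lemma dinv_step:
  assumes dinv: "dinv P S0 C" and p: "p \<in> P" and st: "dle_step P p C C'"
  shows "dinv P S0 C'"
  using st
proof (cases rule: dle_step.cases)
  case idle_terminated then show ?thesis using dinv by simp
next
  case (contract h t) then show ?thesis using dinv_contract[OF dinv p] by simp
next
  case (terminate v) then show ?thesis using dinv_terminate[OF dinv] by simp
next
  case (wait_decided v) then show ?thesis using dinv by simp
next
  case (become_leader v) then show ?thesis using dinv_leader[OF dinv p] by simp
next
  case (erode_expand v u) then show ?thesis using dinv_expand[OF dinv p] by simp
next
  case (erode_follower v) then show ?thesis using dinv_follower[OF dinv p] by simp
next
  case (wait_undecided v) then show ?thesis using dinv by simp
qed


lemma ecc_hexd: "eccentricity S0 z = Max ((\<lambda>u. hexd z u) ` S0)"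
  unfolding eccentricity_def gdist_eq ..

lemma dinv_init:
  assumes pi: "permitted_init P C0"
  shows "dinv P (occupied P C0) C0"
proof -
  define S0 where "S0 = occupied P C0"
  from pi have fin: "finite P" and allc: "\<forall>p\<in>P. \<exists>v. pos C0 p = Contr v" and inj: "inj_on (pos C0) P"
    and cs: "connected_shape S0" and st: "\<forall>p\<in>P. stat C0 p = Undecided \<and> \<not> terminated C0 p"
    and el: "elig C0 = area S0" unfolding permitted_init_def S0_def by auto
  have S0fin: "finite S0" and S0ne: "S0 \<noteq> {}" and S0c: "connected_set S0"
    using cs unfolding connected_shape_def by auto
  have H: "heads P C0 = S0"
  proof
    show "heads P C0 \<subseteq> S0" using heads_occupied unfolding S0_def .
    show "S0 \<subseteq> heads P C0"
    proof
      fix x assume "x \<in> S0"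
      then obtain p where p: "p \<in> P" "x \<in> occ_pts (pos C0 p)" unfolding S0_def occupied_iff by blast
      obtain y where y: "pos C0 p = Contr y" using allc p(1) by blast
      then have "x = y" using p by simp
      then show "x \<in> heads P C0" unfolding heads_img using p(1) y by force
    qed
  qed
  have c1: "inv_tail P C0" unfolding inv_tail_def using allc by fastforce
  have c2: "inv_disj P C0" unfolding inv_disj_def
  proof (intro ballI impI)
    fix p q assume pq: "p \<in> P" "q \<in> P" "p \<noteq> q"
    obtain x where x: "pos C0 p = Contr x" using allc pq(1) by blast
    obtain y where y: "pos C0 q = Contr y" using allc pq(2) by blast
    have "pos C0 p \<noteq> pos C0 q" using inj pq unfolding inj_on_def by blast
    then show "occ_pts (pos C0 p) \<inter> occ_pts (pos C0 q) = {}" using x y by auto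
  qed
  have c3: "inv_term P C0" unfolding inv_term_def using st by blast
  have c4: "inv_und P C0" unfolding inv_und_def
  proof (intro ballI impI)
    fix p assume p: "p \<in> P" "stat C0 p = Undecided"
    have "occ_pts (pos C0 p) \<subseteq> S0" using p(1) unfolding S0_def occupied_def by blast
    then show "(\<forall>x. pos C0 p = Contr x \<longrightarrow> x \<in> elig C0) \<and> (\<forall>h t. pos C0 p = Exp h t \<longrightarrow> h \<in> elig C0)"
      unfolding el using area_sub[of S0] by auto
  qed
  have c5: "inv_lead P C0" unfolding inv_lead_def using st by auto
  have c6: "inv_area P S0 C0" unfolding inv_area_def el S0_def using area_sub by blast
  have c7: "connected_set (elig C0)" unfolding el by (rule area_connected[OF S0c])
  have X: "Xset P C0 = S0" unfolding Xset_def el S0_def using area_sub by blast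
  have c8: "inv_I P C0" unfolding inv_I_def X
  proof (intro allI impI)
    fix w assume "w \<in> elig C0 \<and> w \<notin> S0"
    then show "finite (reach (- S0) w)" unfolding el area_def outer_reach by auto
  qed
  have c9: "inv_J P S0 C0" unfolding inv_J_def H
  proof (intro ballI allI impI)
    fix z i assume z: "z \<in> elig C0" and hi: "(\<exists>x\<in>S0. hexd z x \<le> i) \<and> i \<le> eccentricity S0 z"
    then obtain x where x: "x \<in> S0" "hexd z x \<le> i" by blast
    have "Max ((\<lambda>u. hexd z u) ` S0) \<in> (\<lambda>u. hexd z u) ` S0" using S0fin S0ne by simp
    then obtain xm where xm: "xm \<in> S0" "hexd z xm = eccentricity S0 z" unfolding ecc_hexd by auto
    have "(x, xm) \<in> (Restr gedges S0)\<^sup>*" using S0c x(1) xm(1) unfolding connected_set_def by blast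
    from ivt[OF this x(1) x(2)] hi xm show "\<exists>x\<in>S0. hexd z x = i" by simp
  qed
  show ?thesis using c1 c2 c3 c4 c5 c6 c7 c8 c9 unfolding dinv_def S0_def by blast
qed


theorem lemma4p10:
  fixes P :: "'p set" and C :: "nat \<Rightarrow> 'p conf" and act :: "nat \<Rightarrow> 'p"
    and t :: nat and ld :: 'p and l :: point
  assumes "permitted_init P (C 0)"
    and "fair_execution P C act"
    and "\<forall>p\<in>P. terminated (C t) p"
    and "ld \<in> P" and "stat (C t) ld = Leader" and "pos (C t) ld = Contr l"
  shows "(\<forall>i \<le> eccentricity (occupied P (C 0)) l.
            \<exists>q\<in>P. \<exists>w. pos (C t) q = Contr w \<and> gdist l w = i)
       \<and> (\<forall>q\<in>P. \<forall>w \<in> occ_pts (pos (C t) q). gdist l w \<le> eccentricity (occupied P (C 0)) l)"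
proof -
  define S0 where "S0 = occupied P (C 0)"
  have steps: "act n \<in> P \<and> dle_step P (act n) (C n) (C (Suc n))" for n
    using assms(2) unfolding fair_execution_def by blast
  have invn: "dinv P S0 (C n)" for n
  proof (induction n)
    case 0 then show ?case unfolding S0_def by (rule dinv_init[OF assms(1)])
  next
    case (Suc n)
    from steps[of n] have "act n \<in> P" "dle_step P (act n) (C n) (C (Suc n))" by auto
    then show ?case using dinv_step[OF Suc.IH] by blast
  qed
  have cs: "connected_shape S0" using assms(1) unfolding permitted_init_def S0_def by simp
  then have S0fin: "finite S0" and S0ne: "S0 \<noteq> {}" unfolding connected_shape_def by auto
  from invn[of t] have tm: "inv_term P (C t)" and J: "inv_J P S0 (C t)" and ar: "inv_area P S0 (C t)"
    and ldi: "inv_lead P (C t)" unfolding dinv_def by auto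
  have le: "l \<in> elig (C t)"
  proof -
    obtain x where "pos (C t) ld = Contr x" "x \<in> elig (C t)" using ldi assms(4,5) unfolding inv_lead_def by blast
    then show ?thesis using assms(6) by simp
  qed
  have lH: "l \<in> heads P (C t)"
  proof -
    have "hdl (pos (C t) ld) = l" using assms(6) by simp
    then show ?thesis unfolding heads_img by (intro rev_image_eqI[OF assms(4)]) simp
  qed
  have allc: "\<forall>q\<in>P. \<exists>x. pos (C t) q = Contr x" using tm assms(3) unfolding inv_term_def by blast
  have part1: "\<exists>q\<in>P. \<exists>w. pos (C t) q = Contr w \<and> gdist l w = i" if i: "i \<le> eccentricity S0 l" for i
  proof -
    have "hexd l l = 0" using hexd_zero[of l l] by simp
    then have "\<exists>x\<in>heads P (C t). hexd l x \<le> i" using lH by (intro bexI[of _ l]) simp_all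
    then obtain x where x: "x \<in> heads P (C t)" "hexd l x = i" using J le i unfolding inv_J_def by blast
    then obtain q where q: "q \<in> P" "x = hdl (pos (C t) q)" unfolding heads_img by blast
    obtain y where y: "pos (C t) q = Contr y" using allc q(1) by blast
    then have "x = y" using q by simp
    then have "gdist l y = i" using x(2) gdist_eq[of l y] by simp
    then show ?thesis using q(1) y by blast
  qed
  have part2: "gdist l w \<le> eccentricity S0 l" if "q \<in> P" "w \<in> occ_pts (pos (C t) q)" for q w
  proof -
    have "w \<in> occupied P (C t)" using that unfolding occupied_iff by blast
    then have "w \<in> area S0" using ar unfolding inv_area_def by blast
    then have "hexd l w \<le> Max ((\<lambda>u. hexd l u) ` S0)" using area_ball[OF S0fin S0ne, of l] by blast
    then show ?thesis unfolding ecc_hexd gdist_eq .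
  qed
  show ?thesis using part1 part2 unfolding S0_def by blast
qed


end
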